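(* In a Fisher market in which every buyer has a Leontief utility function, run asynchronous tatonnement with update rule $p_j^{t+}=p_j^t(1+\lambda\min\{\tilde z_j,1\}(t-\tau_j))$, $0<\lambda\le\frac1{23.46}$, from strictly positive initial prices. Then for every $\epsilon>0$ there is a finite time $T_\epsilon$ such that for every good $j$, every $t\ge T_\epsilon$ and every $0\le\Delta t\le1$, $|p_j^t-p_j^{t+\Delta t}|\le\epsilon$.
   Context: A Fisher market has $n$ goods, each with supply $1$, and buyers $i$ with budgets $e_i>0$. At prices $p$, buyer $i$ demands a utility-maximizing bundle $(x_{ij}(p))_j$ of cost at most $e_i$; $x_j(p)=\sum_ix_{ij}(p)$, excess demand $z_j(p)=x_j(p)-1$. A Leontief utility is $u_i(x)=\min_{j\in S_i}b_{ij}x_{ij}$ for a nonempty set $S_i$ of goods and $b_{ij}>0$. Asynchronous tatonnement: continuous time $t\ge0$; each price $p_j$ changes only at discrete update times, no two updates simultaneous, consecutive updates to the same price at most one time unit apart; $p^t$ denotes current prices just before any update at time $t$, $p_j^{t+}$ the value just after. At an update to $p_j$ at time $t$, $\tau_j$ is the previous update time of $p_j$ ($0$ if none) and $\tilde z_j$ is any value between the minimum and maximum of $z_j(p^{t'})$ over $t'\in(\tau_j,t]$. *)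

theory Defs
  imports Complex_Main
begin

text \<open>Buyers are the elements of a finite type 'b, goods the elements of a finite
  type 'g; every good has supply 1.  A bundle / price vector is a function on goods.\<close>

definition leontief_util :: "('b \<Rightarrow> 'g set) \<Rightarrow> ('b \<Rightarrow> 'g \<Rightarrow> real) \<Rightarrow> 'b \<Rightarrow> ('g \<Rightarrow> real) \<Rightarrow> real" where
  "leontief_util S b i x = Min ((\<lambda>j. b i j * x j) ` S i)"

definition leontief_fisher_market ::
  "('b::finite \<Rightarrow> real) \<Rightarrow> ('b \<Rightarrow> 'g::finite set) \<Rightarrow> ('b \<Rightarrow> 'g \<Rightarrow> real) \<Rightarrow> bool" where
  "leontief_fisher_market e S b \<longleftrightarrow>
     (\<forall>i. 0 < e i) \<and> (\<forall>i. S i \<noteq> {}) \<and> (\<forall>i. \<forall>j\<in>S i. 0 < b i j)"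

definition affordable :: "('g::finite \<Rightarrow> real) \<Rightarrow> real \<Rightarrow> ('g \<Rightarrow> real) \<Rightarrow> bool" where
  "affordable p budget x \<longleftrightarrow> (\<forall>j. 0 \<le> x j) \<and> (\<Sum>j\<in>UNIV. p j * x j) \<le> budget"

definition demand_bundle ::
  "(('g::finite \<Rightarrow> real) \<Rightarrow> real) \<Rightarrow> ('g \<Rightarrow> real) \<Rightarrow> real \<Rightarrow> ('g \<Rightarrow> real) \<Rightarrow> bool" where
  "demand_bundle u p budget x \<longleftrightarrow>
     affordable p budget x \<and> (\<forall>y. affordable p budget y \<longrightarrow> u y \<le> u x)"

text \<open>D p i is the bundle demanded by buyer i at prices p (for strictly positive prices,
  where the Leontief demand exists).\<close>
definition is_leontief_demand ::
  "('b::finite \<Rightarrow> real) \<Rightarrow> ('b \<Rightarrow> 'g::finite set) \<Rightarrow> ('b \<Rightarrow> 'g \<Rightarrow> real)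
     \<Rightarrow> (('g \<Rightarrow> real) \<Rightarrow> 'b \<Rightarrow> 'g \<Rightarrow> real) \<Rightarrow> bool" where
  "is_leontief_demand e S b D \<longleftrightarrow>
     (\<forall>p. (\<forall>j. 0 < p j) \<longrightarrow> (\<forall>i. demand_bundle (leontief_util S b i) p (e i) (D p i)))"

definition excess_demand ::
  "(('g \<Rightarrow> real) \<Rightarrow> 'b::finite \<Rightarrow> 'g \<Rightarrow> real) \<Rightarrow> ('g \<Rightarrow> real) \<Rightarrow> 'g \<Rightarrow> real" where
  "excess_demand D p j = (\<Sum>i\<in>UNIV. D p i j) - 1"

text \<open>s j k is the time of the k-th update (k = 0, 1, ...) of price p_j.\<close>
definition async_schedule :: "('g \<Rightarrow> nat \<Rightarrow> real) \<Rightarrow> bool" where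
  "async_schedule s \<longleftrightarrow>
     (\<forall>j. 0 \<le> s j 0 \<and> s j 0 \<le> 1) \<and>
     (\<forall>j k. s j k < s j (Suc k) \<and> s j (Suc k) \<le> s j k + 1) \<and>
     (\<forall>j. filterlim (s j) at_top sequentially) \<and>
     (\<forall>j j' k k'. j \<noteq> j' \<longrightarrow> s j k \<noteq> s j' k')"

text \<open>Previous update time tau_j of the k-th update of p_j (0 if none).\<close>
definition prev_update :: "('g \<Rightarrow> nat \<Rightarrow> real) \<Rightarrow> 'g \<Rightarrow> nat \<Rightarrow> real" where
  "prev_update s j k = (if k = 0 then 0 else s j (k - 1))"

text \<open>a j 0 is the initial price of good j, a j (Suc k) its value just after the k-th
  update.  price_at s a j t is p_j^t, the value just before any update at time t.\<close>
definition price_at :: "('g \<Rightarrow> nat \<Rightarrow> real) \<Rightarrow> ('g \<Rightarrow> nat \<Rightarrow> real) \<Rightarrow> 'g \<Rightarrow> real \<Rightarrow> real" where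
  "price_at s a j t = a j (card {k. s j k < t})"

definition price_vec :: "('g \<Rightarrow> nat \<Rightarrow> real) \<Rightarrow> ('g \<Rightarrow> nat \<Rightarrow> real) \<Rightarrow> real \<Rightarrow> 'g \<Rightarrow> real" where
  "price_vec s a t = (\<lambda>j. price_at s a j t)"

text \<open>Asynchronous tatonnement run: zt j k is the value tilde-z_j used at the k-th update
  of p_j; it lies between the minimum and maximum of z_j(p^{t'}) over t' in (tau_j, t]
  (i.e. between two attained values; the set of attained values is finite).\<close>
definition tatonnement_run ::
  "(('g \<Rightarrow> real) \<Rightarrow> 'b::finite \<Rightarrow> 'g \<Rightarrow> real) \<Rightarrow> ('g \<Rightarrow> nat \<Rightarrow> real) \<Rightarrow> ('g \<Rightarrow> nat \<Rightarrow> real)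
     \<Rightarrow> ('g \<Rightarrow> nat \<Rightarrow> real) \<Rightarrow> real \<Rightarrow> bool" where
  "tatonnement_run D s a zt lam \<longleftrightarrow>
     (\<forall>j k.
        (prev_update s j k < s j k \<longrightarrow>
           (\<exists>t1 t2. t1 \<in> {prev_update s j k<..s j k} \<and> t2 \<in> {prev_update s j k<..s j k} \<and>
              excess_demand D (price_vec s a t1) j \<le> zt j k \<and>
              zt j k \<le> excess_demand D (price_vec s a t2) j)) \<and>
        a j (Suc k) = a j k * (1 + lam * min (zt j k) 1 * (s j k - prev_update s j k)))"

end

theory Submission
  imports Defs
begin


locale tat =
  fixes e :: "'b::finite \<Rightarrow> real" and S :: "'b \<Rightarrow> 'g::finite set"
    and b :: "'b \<Rightarrow> 'g \<Rightarrow> real"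
    and D :: "('g \<Rightarrow> real) \<Rightarrow> 'b \<Rightarrow> 'g \<Rightarrow> real"
    and s :: "'g \<Rightarrow> nat \<Rightarrow> real" and a :: "'g \<Rightarrow> nat \<Rightarrow> real"
    and zt :: "'g \<Rightarrow> nat \<Rightarrow> real" and lam :: real
  assumes mkt: "leontief_fisher_market e S b"
    and dem: "is_leontief_demand e S b D"
    and sch: "async_schedule s"
    and lam_pos: "0 < lam" and lam_le: "lam \<le> 1 / 20"
    and a0: "\<forall>j. 0 < a j 0"
    and run: "tatonnement_run D s a zt lam"
begin

lemma e_pos: "0 < e i" using mkt unfolding leontief_fisher_market_def by auto
lemma S_ne: "S i \<noteq> {}" using mkt unfolding leontief_fisher_market_def by auto
lemma b_pos: "j \<in> S i \<Longrightarrow> 0 < b i j" using mkt unfolding leontief_fisher_market_def by auto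

lemma s_mono1: "s j k < s j (Suc k)" using sch unfolding async_schedule_def by auto
lemma s_gap: "s j (Suc k) \<le> s j k + 1" using sch unfolding async_schedule_def by auto
lemma s0: "0 \<le> s j 0" "s j 0 \<le> 1" using sch unfolding async_schedule_def by auto
lemma s_lim: "filterlim (s j) at_top sequentially" using sch unfolding async_schedule_def by auto
lemma s_dist: "j \<noteq> j' \<Longrightarrow> s j k \<noteq> s j' k'" using sch unfolding async_schedule_def by auto

lemma s_smono: "strict_mono (s j)"
  by (simp add: strict_mono_Suc_iff s_mono1)
lemma s_less_iff: "s j k < s j k' \<longleftrightarrow> k < k'"
  using s_smono by (simp add: strict_mono_less)
lemma s_le_iff: "s j k \<le> s j k' \<longleftrightarrow> k \<le> k'"
  using s_smono by (simp add: strict_mono_less_eq)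
lemma s_inj: "s j k = s j k' \<longleftrightarrow> k = k'"
  using s_le_iff[of j k k'] s_le_iff[of j k' k] by (metis order.antisym order.refl)
lemma s_nonneg: "0 \<le> s j k"
  using s0(1)[of j] s_le_iff[of j 0 k] by linarith

lemma fin_lt: "finite {k. s j k < t}"
proof -
  from s_lim[of j] have "\<forall>\<^sub>F k in sequentially. t \<le> s j k"
    by (simp add: filterlim_at_top)
  then obtain K where K: "\<And>k. k \<ge> K \<Longrightarrow> t \<le> s j k" by (auto simp: eventually_sequentially)
  have "{k. s j k < t} \<subseteq> {..<K}"
    using K by (force simp: not_less[symmetric])
  then show ?thesis by (rule finite_subset) simp
qed

definition cnt :: "'g \<Rightarrow> real \<Rightarrow> nat" where "cnt j t = card {k. s j k < t}"

lemma lt_set: "{k. s j k < t} = {..<cnt j t}"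
proof -
  have dc: "\<And>k k'. k' \<le> k \<Longrightarrow> s j k < t \<Longrightarrow> s j k' < t"
    using s_le_iff by (meson le_less_trans)
  show ?thesis
  proof (cases "{k. s j k < t} = {}")
    case True then show ?thesis by (simp add: cnt_def)
  next
    case False
    define M where "M = Max {k. s j k < t}"
    have M: "s j M < t" "\<And>k. s j k < t \<Longrightarrow> k \<le> M"
      using Max_in[OF fin_lt False] Max_ge[OF fin_lt] unfolding M_def by auto
    have "{k. s j k < t} = {..<Suc M}" using M dc by (auto simp: less_Suc_eq_le)
    then show ?thesis by (simp add: cnt_def)
  qed
qed

lemma lt_cnt: "s j k < t \<longleftrightarrow> k < cnt j t"
  using lt_set[of j t] by blast

lemma cnt_s: "cnt j (s j q) = q"
proof -
  have "{k. s j k < s j q} = {..<q}" by (auto simp: s_less_iff)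
  then show ?thesis by (simp add: cnt_def)
qed

lemma cnt_mono: "t \<le> t' \<Longrightarrow> cnt j t \<le> cnt j t'"
  by (metis lt_cnt dual_order.strict_trans2 leI less_irrefl)

lemma price_at_cnt: "price_at s a j t = a j (cnt j t)"
  by (simp add: price_at_def cnt_def)

abbreviation pv where "pv t \<equiv> price_vec s a t"

lemma pv_app: "pv t j = a j (cnt j t)"
  by (simp add: price_vec_def price_at_cnt)

lemma pv_s: "pv (s j q) j = a j q"
  by (simp add: pv_app cnt_s)

definition tau where "tau j q = prev_update s j q"
definition dl where "dl j q = s j q - tau j q"

lemma tau_Suc: "tau j (Suc q) = s j q" by (simp add: tau_def prev_update_def)
lemma tau_0: "tau j 0 = 0" by (simp add: tau_def prev_update_def)

lemma dl_nonneg: "0 \<le> dl j q"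
  by (cases q) (auto simp: dl_def tau_0 tau_Suc s_nonneg less_imp_le[OF s_mono1])
lemma dl_le1: "dl j q \<le> 1"
  using s0(2)[of j] s_gap[of j] by (cases q) (auto simp: dl_def tau_0 tau_Suc add.commute diff_le_eq)

lemma dl_Suc_pos: "0 < dl j (Suc q)"
  by (simp add: dl_def tau_Suc s_mono1)

lemma tau_le: "tau j q \<le> s j q" using dl_nonneg by (simp add: dl_def)

definition mm where "mm j q = min (zt j q) 1"
definition rr where "rr j q = lam * mm j q * dl j q"

lemma a_Suc: "a j (Suc q) = a j q * (1 + rr j q)"
  using run unfolding tatonnement_run_def rr_def mm_def dl_def tau_def by (auto simp: mult.assoc)

lemma zt_between: "tau j q < s j q \<Longrightarrow> \<exists>t1 t2. t1 \<in> {tau j q<..s j q} \<and> t2 \<in> {tau j q<..s j q} \<and>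
              excess_demand D (pv t1) j \<le> zt j q \<and> zt j q \<le> excess_demand D (pv t2) j"
  using run unfolding tatonnement_run_def tau_def by blast


definition L where "L P i = (\<Sum>j\<in>S i. P j / b i j)"
definition al where "al P i j = (if j \<in> S i then (P j / b i j) / L P i else 0)"
definition spend where "spend P j = (\<Sum>i\<in>UNIV. e i * al P i j)"

abbreviation ppos where "ppos P \<equiv> (\<forall>j. 0 < P j)"

lemma L_pos: "ppos P \<Longrightarrow> 0 < L P i"
proof -
  assume P: "ppos P"
  obtain j where j: "j \<in> S i" using S_ne by blast
  have "0 < P j / b i j" using P b_pos[OF j] by simp
  also have "\<dots> \<le> L P i" unfolding L_def
    by (rule member_le_sum) (use j P b_pos in \<open>auto intro: less_imp_le\<close>)
  finally show ?thesis .
qed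

lemma al_nonneg: "ppos P \<Longrightarrow> 0 \<le> al P i j"
  using L_pos[of P i] b_pos[of j i] by (auto simp: al_def intro!: divide_nonneg_pos less_imp_le)

lemma al_sum: "ppos P \<Longrightarrow> (\<Sum>j\<in>UNIV. al P i j) = 1"
proof -
  assume P: "ppos P"
  have "(\<Sum>j\<in>UNIV. al P i j) = (\<Sum>j\<in>S i. (P j / b i j) / L P i)"
    unfolding al_def by (simp add: sum.If_cases)
  also have "\<dots> = L P i / L P i" unfolding L_def by (rule sum_divide_distrib[symmetric])
  also have "\<dots> = 1" using L_pos[OF P, of i] by simp
  finally show ?thesis .
qed

lemma al_le1: "ppos P \<Longrightarrow> al P i j \<le> 1"
proof -
  assume P: "ppos P"
  have "al P i j \<le> (\<Sum>j\<in>UNIV. al P i j)"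
    by (rule member_le_sum) (auto simp: al_nonneg P)
  then show ?thesis using al_sum[OF P] by simp
qed

lemma D_formula: assumes P: "ppos P" shows "D P i j = e i * al P i j / P j"
proof -
  define y where "y = (\<lambda>j. if j \<in> S i then e i / (b i j * L P i) else 0)"
  have Lp: "0 < L P i" by (rule L_pos[OF P])
  have y_eq: "y j = e i * al P i j / P j" for j
    using P[rule_format, of j] Lp by (auto simp: y_def al_def field_simps)
  have y_nn: "0 \<le> y j" for j using e_pos[of i] b_pos[of j i] Lp by (auto simp: y_def)
  have cost_y: "(\<Sum>j\<in>UNIV. P j * y j) = e i"
  proof -
    have "(\<Sum>j\<in>UNIV. P j * y j) = (\<Sum>j\<in>UNIV. e i * al P i j)"
      using P by (intro sum.cong) (auto simp: y_eq less_le)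
    also have "\<dots> = e i" using al_sum[OF P, of i] by (simp add: sum_distrib_left[symmetric])
    finally show ?thesis .
  qed
  have aff_y: "affordable P (e i) y" unfolding affordable_def using y_nn cost_y by simp
  have fS: "finite (S i)" by simp
  have uy: "leontief_util S b i y = e i / L P i"
  proof -
    have "(\<lambda>j. b i j * y j) ` S i = (\<lambda>j. e i / L P i) ` S i"
      using b_pos[of _ i] by (intro image_cong) (auto simp: y_def less_le)
    also have "\<dots> = {e i / L P i}" using S_ne[of i] by auto
    finally have "(\<lambda>j. b i j * y j) ` S i = {e i / L P i}" .
    then show ?thesis by (simp add: leontief_util_def)
  qed
  have dD: "demand_bundle (leontief_util S b i) P (e i) (D P i)"
    using dem P unfolding is_leontief_demand_def by blast
  then have affD: "affordable P (e i) (D P i)" and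
     uD: "leontief_util S b i y \<le> leontief_util S b i (D P i)"
    using aff_y unfolding demand_bundle_def by auto
  have Dge: "y j \<le> D P i j" for j
  proof (cases "j \<in> S i")
    case True
    have "e i / L P i \<le> Min ((\<lambda>j. b i j * D P i j) ` S i)"
      using uD uy unfolding leontief_util_def by simp
    also have "\<dots> \<le> b i j * D P i j" using True by (intro Min_le) auto
    finally have "e i / L P i \<le> b i j * D P i j" .
    moreover have "e i / (b i j * L P i) = (e i / L P i) / b i j" by (simp add: mult.commute)
    moreover have "(e i / L P i) / b i j \<le> D P i j"
      apply (subst pos_divide_le_eq[OF b_pos[OF True]])
      using \<open>e i / L P i \<le> b i j * D P i j\<close> by (simp add: mult.commute)
    ultimately show ?thesis using True by (simp add: y_def mult.commute)
  next
    case False then show ?thesis using affD by (simp add: y_def affordable_def)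
  qed
  have costD: "(\<Sum>j\<in>UNIV. P j * D P i j) \<le> e i" using affD by (simp add: affordable_def)
  have "(\<Sum>j\<in>UNIV. P j * (D P i j - y j)) = 0"
  proof (rule antisym)
    show "(\<Sum>j\<in>UNIV. P j * (D P i j - y j)) \<le> 0"
      using costD cost_y by (simp add: right_diff_distrib sum_subtractf)
    show "0 \<le> (\<Sum>j\<in>UNIV. P j * (D P i j - y j))"
      using P Dge by (intro sum_nonneg) (metis diff_ge_0_iff_ge less_imp_le mult_nonneg_nonneg)
  qed
  moreover have "\<forall>j\<in>UNIV. 0 \<le> P j * (D P i j - y j)"
    using P Dge by (metis diff_ge_0_iff_ge less_imp_le mult_nonneg_nonneg)
  ultimately have "\<forall>j\<in>UNIV. P j * (D P i j - y j) = 0"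
    using sum_nonneg_eq_0_iff[of UNIV "\<lambda>j. P j * (D P i j - y j)"] by simp
  then have "D P i j = y j" using P[rule_format, of j] by (metis UNIV_I less_irrefl mult_eq_0_iff right_minus_eq)
  then show ?thesis by (simp add: y_eq)
qed

lemma excess_formula: "ppos P \<Longrightarrow> excess_demand D P j = spend P j / P j - 1"
  by (simp add: excess_demand_def D_formula spend_def sum_divide_distrib)

lemma spend_nonneg: "ppos P \<Longrightarrow> 0 \<le> spend P j"
  unfolding spend_def by (intro sum_nonneg mult_nonneg_nonneg) (auto simp: al_nonneg e_pos less_imp_le)

lemma excess_ge: "ppos P \<Longrightarrow> -1 \<le> excess_demand D P j"
  using spend_nonneg[of P j] by (simp add: excess_formula divide_nonneg_pos)


definition F :: "real \<Rightarrow> ('g \<times> nat) set" where "F T = {(j,q). s j q < T}"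
definition tm :: "'g \<times> nat \<Rightarrow> real" where "tm ev = s (fst ev) (snd ev)"

lemma F_eq: "F T = Sigma UNIV (\<lambda>j. {q. s j q < T})" by (auto simp: F_def)
lemma finite_F: "finite (F T)" unfolding F_eq by (intro finite_SigmaI) (auto simp: fin_lt)
lemma F_mem: "ev \<in> F T \<longleftrightarrow> tm ev < T" by (cases ev) (auto simp: F_def tm_def)

lemma a_pos: "0 < a j q"
proof (rule ccontr)
  assume "\<not> 0 < a j q"
  then have nq: "a j q \<le> 0" by simp
  then obtain q' where q': "q = Suc q'" using a0 by (cases q) (auto simp: not_less dest: spec[of _ j])
  define bad where "bad = {ev. a (fst ev) (Suc (snd ev)) \<le> 0 \<and> tm ev \<le> s j q'}"
  have "bad \<subseteq> F (s j q' + 1)" by (auto simp: bad_def F_mem)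
  then have fb: "finite bad" using finite_F finite_subset by blast
  have "(j,q') \<in> bad" using nq q' by (simp add: bad_def tm_def)
  then have nb: "bad \<noteq> {}" by blast
  define e0 where "e0 = arg_min_on tm bad"
  have e0: "e0 \<in> bad" "\<And>ev. ev \<in> bad \<Longrightarrow> tm e0 \<le> tm ev"
    using arg_min_if_finite[OF fb nb, of tm] unfolding e0_def by (auto simp: not_less)
  obtain j0 q0 where e0eq: "e0 = (j0,q0)" by (cases e0)
  have t0le: "s j0 q0 \<le> s j q'" using e0(1) by (simp add: bad_def e0eq tm_def)
  have good: "0 < a j' (Suc q'')" if "s j' q'' < s j0 q0" for j' q''
  proof (rule ccontr)
    assume "\<not> 0 < a j' (Suc q'')"
    then have "(j',q'') \<in> bad" using that t0le by (auto simp: bad_def tm_def)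
    from e0(2)[OF this] that show False by (simp add: e0eq tm_def)
  qed
  have pvpos: "0 < pv t k" if "t \<le> s j0 q0" for t k
  proof (cases "cnt k t")
    case 0 then show ?thesis using a0 by (simp add: pv_app)
  next
    case (Suc c)
    then have "s k c < t" using lt_cnt by simp
    then show ?thesis using good[of k c] that Suc by (simp add: pv_app)
  qed
  have aq0: "0 < a j0 q0" using pvpos[of "s j0 q0" j0] by (simp add: pv_s)
  have "1 + rr j0 q0 > 0"
  proof (cases "tau j0 q0 < s j0 q0")
    case True
    from zt_between[OF True] obtain t1 where t1: "t1 \<in> {tau j0 q0<..s j0 q0}"
      and "excess_demand D (pv t1) j0 \<le> zt j0 q0" by blast
    moreover have "ppos (pv t1)" using pvpos t1 by auto
    ultimately have "-1 \<le> zt j0 q0" using excess_ge[of "pv t1" j0] by (meson order.trans)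
    then have m: "-1 \<le> mm j0 q0" "mm j0 q0 \<le> 1" by (auto simp: mm_def)
    have "- dl j0 q0 \<le> mm j0 q0 * dl j0 q0"
      using mult_right_mono[OF m(1) dl_nonneg[of j0 q0]] by simp
    then have "-1 \<le> mm j0 q0 * dl j0 q0" using dl_le1[of j0 q0] by linarith
    then have "lam * (-1) \<le> lam * (mm j0 q0 * dl j0 q0)"
      using lam_pos by (intro mult_left_mono) auto
    then have "- lam \<le> rr j0 q0" unfolding rr_def by (simp add: mult.assoc)
    then show ?thesis using lam_le by linarith
  next
    case False
    then have "dl j0 q0 = 0" using tau_le[of j0 q0] by (simp add: dl_def)
    then show ?thesis by (simp add: rr_def)
  qed
  then have "0 < a j0 (Suc q0)" using aq0 by (simp add: a_Suc)
  then show False using e0(1) by (simp add: bad_def e0eq)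
qed

lemma pv_pos: "ppos (pv t)" by (simp add: pv_app a_pos)

lemma mm_bounds: "tau j q < s j q \<Longrightarrow> -1 \<le> mm j q \<and> mm j q \<le> 1"
proof -
  assume True: "tau j q < s j q"
  from zt_between[OF True] obtain t1 where "excess_demand D (pv t1) j \<le> zt j q" by blast
  then have "-1 \<le> zt j q" using excess_ge[of "pv t1" j] pv_pos by force
  then show ?thesis by (auto simp: mm_def)
qed

lemma rr_abs: "\<bar>rr j q\<bar> = lam * \<bar>mm j q\<bar> * dl j q"
  using lam_pos dl_nonneg[of j q] by (simp add: rr_def abs_mult)

lemma rr_bound: "\<bar>rr j q\<bar> \<le> lam * dl j q"
proof (cases "tau j q < s j q")
  case True
  then have "\<bar>mm j q\<bar> \<le> 1" using mm_bounds[OF True] by (simp add: abs_le_iff)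
  then show ?thesis unfolding rr_abs using lam_pos dl_nonneg[of j q]
    by (simp add: mult_left_le mult_le_cancel_right1 mult.commute mult.left_commute)
next
  case False
  then have "dl j q = 0" using tau_le[of j q] by (simp add: dl_def)
  then show ?thesis by (simp add: rr_def)
qed

lemma rr_lam: "\<bar>rr j q\<bar> \<le> lam"
proof -
  have "lam * dl j q \<le> lam * 1" using dl_le1[of j q] lam_pos by (intro mult_left_mono) auto
  then show ?thesis using rr_bound[of j q] by simp
qed


definition bef :: "'g \<times> nat \<Rightarrow> 'g \<Rightarrow> real" where "bef ev = pv (tm ev)"
definition aft :: "'g \<times> nat \<Rightarrow> 'g \<Rightarrow> real" where
  "aft ev = (bef ev)(fst ev := a (fst ev) (Suc (snd ev)))"

lemma bef_self: "bef (j,q) j = a j q" by (simp add: bef_def tm_def pv_s)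
lemma aft_eq: "aft (j,q) = (bef (j,q))(j := bef (j,q) j * (1 + rr j q))"
  by (simp add: aft_def bef_self a_Suc)
lemma bef_pos: "ppos (bef ev)" by (simp add: bef_def pv_pos)
lemma aft_pos: "ppos (aft ev)" by (simp add: aft_def bef_pos a_pos)

lemma tm_inj: "tm ev = tm ev' \<Longrightarrow> ev = ev'"
  apply (cases ev; cases ev')
  apply (auto simp: tm_def)
   apply (metis s_dist)
  by (metis s_dist s_inj)

lemma cnt_cong: "(\<And>k. s j k < t \<longleftrightarrow> s j k < t') \<Longrightarrow> cnt j t = cnt j t'"
  unfolding cnt_def by metis

lemma F_max_step:
  assumes ev: "ev \<in> F T" and mx: "\<And>ev'. ev' \<in> F T \<Longrightarrow> tm ev' \<le> tm ev"
  shows "F (tm ev) = F T - {ev}" "pv T = aft ev"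
proof -
  have lt: "ev' \<in> F T \<Longrightarrow> ev' \<noteq> ev \<Longrightarrow> tm ev' < tm ev" for ev'
    using mx[of ev'] tm_inj[of ev' ev] by fastforce
  have tT: "tm ev < T" using ev F_mem by blast
  show "F (tm ev) = F T - {ev}"
  proof (rule set_eqI)
    fix x show "x \<in> F (tm ev) \<longleftrightarrow> x \<in> F T - {ev}"
      using lt[of x] tT by (auto simp: F_mem)
  qed
  obtain j q where jq: "ev = (j,q)" by (cases ev)
  show "pv T = aft ev"
  proof
    fix k
    show "pv T k = aft ev k"
    proof (cases "k = j")
      case True
      have "s j k' < T \<longleftrightarrow> k' < Suc q" for k'
      proof
        assume "s j k' < T"
        then have "(j,k') \<in> F T" by (simp add: F_def)
        from mx[OF this] show "k' < Suc q" using jq by (simp add: tm_def s_le_iff)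
      next
        assume "k' < Suc q"
        then have "s j k' \<le> s j q" by (simp add: s_le_iff)
        then show "s j k' < T" using tT jq by (simp add: tm_def)
      qed
      then have "cnt j T = Suc q" using lt_cnt[of j _ T] by (metis nat_neq_iff)
      then show ?thesis using True jq by (simp add: pv_app aft_def)
    next
      case False
      have "s k k' < T \<longleftrightarrow> s k k' < tm ev" for k'
      proof
        assume "s k k' < T"
        then have "(k,k') \<in> F T" by (simp add: F_def)
        then show "s k k' < tm ev" using lt[of "(k,k')"] jq False by (simp add: tm_def)
      qed (use tT in auto)
      then have "cnt k T = cnt k (tm ev)" by (rule cnt_cong)
      then show ?thesis using False jq by (simp add: pv_app aft_def bef_def)
    qed
  qed
qed

lemma tele: fixes G :: "('g \<Rightarrow> real) \<Rightarrow> real" shows "G (pv T) = G (\<lambda>j. a j 0) + (\<Sum>ev\<in>F T. G (aft ev) - G (bef ev))"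
proof (induction "card (F T)" arbitrary: T)
  case 0
  then have "F T = {}" using finite_F by simp
  then have "cnt j T = 0" for j
    using lt_cnt[of j 0 T] by (auto simp: F_def)
  then have "pv T = (\<lambda>j. a j 0)" by (auto simp: pv_app)
  then show ?case using \<open>F T = {}\<close> by simp
next
  case (Suc n)
  then have ne: "F T \<noteq> {}" by auto
  define ev where "ev = arg_min_on (\<lambda>x. - tm x) (F T)"
  have ev: "ev \<in> F T" "\<And>ev'. ev' \<in> F T \<Longrightarrow> tm ev' \<le> tm ev"
    using arg_min_if_finite[OF finite_F ne, of "\<lambda>x. - tm x"] unfolding ev_def by (auto simp: not_less)
  have st: "F (tm ev) = F T - {ev}" "pv T = aft ev"
    by (rule F_max_step; use ev in auto)+
  have "n = card (F (tm ev))" using Suc.hyps(2) st(1) ev(1) finite_F by simp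
  from Suc.hyps(1)[OF this]
  have IH: "G (pv (tm ev)) = G (\<lambda>j. a j 0) + (\<Sum>ev\<in>F (tm ev). G (aft ev) - G (bef ev))" .
  have "(\<Sum>ev\<in>F T. G (aft ev) - G (bef ev)) = (G (aft ev) - G (bef ev)) + (\<Sum>ev\<in>F (tm ev). G (aft ev) - G (bef ev))"
    using st(1) ev(1) finite_F by (simp add: sum.remove)
  moreover have "G (bef ev) = G (pv (tm ev))" by (simp add: bef_def)
  moreover have "G (pv T) = G (aft ev)" using st(2) by simp
  ultimately show ?case using IH by linarith
qed

lemma F_mono: "T1 \<le> T2 \<Longrightarrow> F T1 \<subseteq> F T2" by (auto simp: F_mem)

lemma tele2: fixes G :: "('g \<Rightarrow> real) \<Rightarrow> real" shows "T1 \<le> T2 \<Longrightarrow> G (pv T2) - G (pv T1) = (\<Sum>ev\<in>F T2 - F T1. G (aft ev) - G (bef ev))"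
proof -
  assume T: "T1 \<le> T2"
  have "(\<Sum>ev\<in>F T2. G (aft ev) - G (bef ev)) = (\<Sum>ev\<in>F T2 - F T1. G (aft ev) - G (bef ev)) + (\<Sum>ev\<in>F T1. G (aft ev) - G (bef ev))"
    by (rule sum.subset_diff[OF F_mono[OF T] finite_F])
  then show ?thesis using tele[of G T2] tele[of G T1] by linarith
qed

end


context tat begin

definition sumdl where "sumdl k N d = (\<Sum>q\<in>{N..<N+d}. dl k q)"

lemma sumdl_tele: "sumdl k N (Suc d) = s k (N + d) - tau k N"
proof (induction d)
  case 0 then show ?case by (simp add: sumdl_def dl_def)
next
  case (Suc d)
  have "sumdl k N (Suc (Suc d)) = sumdl k N (Suc d) + dl k (N + Suc d)"
    by (simp add: sumdl_def)
  also have "dl k (N + Suc d) = s k (N + Suc d) - s k (N + d)"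
    by (simp add: dl_def tau_Suc[of k "N+d", symmetric])
  finally show ?case using Suc by simp
qed

lemma sumdl_nonneg: "0 \<le> sumdl k N d"
  unfolding sumdl_def by (intro sum_nonneg) (simp add: dl_nonneg)

lemma ratio_ind: "a k N * (1 - lam * sumdl k N d) \<le> a k (N + d) \<and>
    a k (N + d) * (1 - lam * sumdl k N d) \<le> a k N"
proof (induction d)
  case 0 then show ?case by (simp add: sumdl_def)
next
  case (Suc d)
  define x where "x = lam * sumdl k N d"
  define y where "y = lam * dl k (N + d)"
  have xy: "lam * sumdl k N (Suc d) = x + y"
    by (simp add: x_def y_def sumdl_def distrib_left)
  have x0: "0 \<le> x" using lam_pos sumdl_nonneg[of k N d] by (simp add: x_def)
  have y0: "0 \<le> y" "y \<le> lam" using lam_pos dl_nonneg[of k "N+d"] dl_le1[of k "N+d"]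
    by (auto simp: y_def mult_left_le)
  have r: "\<bar>rr k (N+d)\<bar> \<le> y" using rr_bound by (simp add: y_def)
  have aS: "a k (N + Suc d) = a k (N + d) * (1 + rr k (N+d))" by (simp add: a_Suc)
  have apos: "0 < a k (N + d)" "0 < a k N" by (simp_all add: a_pos)
  have IH1: "a k N * (1 - x) \<le> a k (N + d)" and IH2: "a k (N + d) * (1 - x) \<le> a k N"
    using Suc by (auto simp: x_def)
  have "a k N * (1 - (x + y)) \<le> a k N * ((1 - x) * (1 - y))"
    using apos x0 y0 by (intro mult_left_mono) (auto simp: algebra_simps)
  also have "\<dots> = (a k N * (1 - x)) * (1 - y)" by simp
  also have "\<dots> \<le> a k (N + d) * (1 - y)"
    using IH1 y0 lam_le by (intro mult_right_mono) auto
  also have "\<dots> \<le> a k (N + d) * (1 + rr k (N+d))"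
    using r apos by (intro mult_left_mono) auto
  finally have A: "a k N * (1 - (x + y)) \<le> a k (N + Suc d)" using aS by simp
  have B: "a k (N + Suc d) * (1 - (x + y)) \<le> a k N"
  proof (cases "0 \<le> 1 - (x + y)")
    case True
    have "a k (N + Suc d) * (1 - (x + y)) \<le> a k (N + d) * (1 + y) * (1 - (x + y))"
      using aS r apos True by (intro mult_right_mono) (auto intro!: mult_left_mono)
    also have "\<dots> \<le> a k (N + d) * (1 - x)"
    proof -
      have "(1 + y) * (1 - (x + y)) \<le> 1 - x" using x0 y0
        by (simp add: algebra_simps)
      then show ?thesis using apos by (simp add: mult.assoc mult_left_mono)
    qed
    also have "\<dots> \<le> a k N" by (rule IH2)
    finally show ?thesis .
  next
    case False
    then have "a k (N + Suc d) * (1 - (x + y)) \<le> 0"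
      using a_pos[of k "N + Suc d"] by (simp add: mult_nonneg_nonpos)
    then show ?thesis using apos by simp
  qed
  show ?case unfolding xy using A B by blast
qed

lemma window_sumdl:
  assumes "ta \<le> tb"
  shows "(\<Sum>q\<in>{cnt k ta..<cnt k tb}. dl k q) \<le> tb - ta + 1"
proof (cases "cnt k ta < cnt k tb")
  case False
  then show ?thesis using assms by simp
next
  case True
  define N where "N = cnt k ta"
  define d where "d = cnt k tb - N - 1"
  have d: "cnt k tb = N + Suc d" using True unfolding N_def d_def by simp
  have "(\<Sum>q\<in>{cnt k ta..<cnt k tb}. dl k q) = s k (N + d) - tau k N"
    using sumdl_tele[of k N d] by (simp add: sumdl_def d N_def)
  also have "s k (N + d) < tb" using d lt_cnt[of k "N+d" tb] by simp
  moreover have "ta - 1 \<le> tau k N"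
  proof (cases N)
    case 0
    then have "\<not> s k 0 < ta" using lt_cnt[of k 0 ta] N_def by simp
    then show ?thesis using s0(2)[of k] 0 by (simp add: tau_0)
  next
    case (Suc c)
    then have "\<not> s k N < ta" using lt_cnt[of k N ta] N_def by simp
    then show ?thesis using s_gap[of k c] Suc by (simp add: tau_Suc)
  qed
  ultimately show ?thesis by linarith
qed

definition q0 where "q0 = 1 - 2 * lam"

lemma q0_bounds: "9/10 \<le> q0" "q0 \<le> 1" using lam_pos lam_le by (auto simp: q0_def)

lemma ratio:
  assumes "ta \<le> tb" "tb \<le> ta + 1"
  shows "q0 * pv ta k \<le> pv tb k" "q0 * pv tb k \<le> pv ta k"
proof -
  define N where "N = cnt k ta"
  define d where "d = cnt k tb - N"
  have d: "cnt k tb = N + d" unfolding N_def d_def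
    using cnt_mono[OF assms(1), of k] by simp
  have "sumdl k N d = (\<Sum>q\<in>{cnt k ta..<cnt k tb}. dl k q)"
    by (simp add: sumdl_def d N_def)
  also have "\<dots> \<le> 2" using window_sumdl[OF assms(1), of k] assms(2) by linarith
  finally have sd: "sumdl k N d \<le> 2" .
  have qle: "q0 \<le> 1 - lam * sumdl k N d"
  proof -
    have "lam * sumdl k N d \<le> lam * 2" using sd lam_pos by (intro mult_left_mono) auto
    then show ?thesis unfolding q0_def by simp
  qed
  from ratio_ind[of k N d] have R: "a k N * (1 - lam * sumdl k N d) \<le> a k (N + d)"
    "a k (N + d) * (1 - lam * sumdl k N d) \<le> a k N" by auto
  have "q0 * a k N \<le> a k N * (1 - lam * sumdl k N d)"
    using qle a_pos[of k N] by (simp add: mult.commute mult_left_mono)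
  then show "q0 * pv ta k \<le> pv tb k" using R(1) by (simp add: pv_app d N_def)
  have "q0 * a k (N+d) \<le> a k (N+d) * (1 - lam * sumdl k N d)"
    using qle a_pos[of k "N+d"] by (simp add: mult.commute mult_left_mono)
  then show "q0 * pv tb k \<le> pv ta k" using R(2) by (simp add: pv_app d N_def)
qed

end



lemma ln_lb: fixes y :: real assumes "\<bar>y\<bar> \<le> 1/2" shows "y - 2 * y^2 \<le> ln (1 + y)"
proof (cases "0 \<le> y")
  case True
  then have "y - y^2 \<le> ln (1 + y)" using assms by (intro ln_one_plus_pos_lower_bound) auto
  moreover have "0 \<le> y^2" by simp
  ultimately show ?thesis by linarith
next
  case False
  then have "- (-y) - 2 * (-y)^2 \<le> ln (1 - (-y))" using assms
    by (intro ln_one_minus_pos_lower_bound) auto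
  then show ?thesis by simp
qed

context tat begin

definition Phi where "Phi P = (\<Sum>j\<in>UNIV. P j) - (\<Sum>i\<in>UNIV. e i * ln (L P i))"

lemma L_upd: assumes P: "ppos P"
  shows "L (P(j := P j * (1 + r))) i = L P i * (1 + al P i j * r)"
proof (cases "j \<in> S i")
  case True
  have "L (P(j := P j * (1 + r))) i = (\<Sum>k\<in>S i. P k / b i k + (if k = j then P j * r / b i k else 0))"
    unfolding L_def by (intro sum.cong) (auto simp: algebra_simps add_divide_distrib)
  also have "\<dots> = L P i + P j * r / b i j"
    using True by (simp add: sum.distrib L_def)
  also have "\<dots> = L P i * (1 + al P i j * r)"
    using True L_pos[OF P, of i] by (simp add: al_def field_simps)
  finally show ?thesis .
next
  case False
  then have "L (P(j := P j * (1 + r))) i = L P i" unfolding L_def by (intro sum.cong) auto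
  then show ?thesis using False by (simp add: al_def)
qed

lemma E1:
  assumes P: "ppos P" and r: "\<bar>r\<bar> \<le> 1/2"
  shows "Phi (P(j := P j * (1 + r))) - Phi P \<le> r * P j - r * spend P j + 2 * r^2 * spend P j"
proof -
  define P' where "P' = P(j := P j * (1 + r))"
  have s1: "(\<Sum>k\<in>UNIV. P' k) = (\<Sum>k\<in>UNIV. P k) + r * P j"
  proof -
    have "(\<Sum>k\<in>UNIV. P' k) = (\<Sum>k\<in>UNIV. P k + (if k = j then r * P j else 0))"
      unfolding P'_def by (intro sum.cong) (auto simp: algebra_simps)
    then show ?thesis by (simp add: sum.distrib)
  qed
  have lnterm: "e i * ln (L P i) + e i * (r * al P i j) - 2 * r^2 * (e i * al P i j) \<le> e i * ln (L P' i)" for i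
  proof -
    have a0: "0 \<le> al P i j" "al P i j \<le> 1" using al_nonneg[OF P] al_le1[OF P] by auto
    have ar: "\<bar>al P i j * r\<bar> \<le> 1/2"
    proof -
      have "al P i j * \<bar>r\<bar> \<le> 1 * \<bar>r\<bar>" using a0 by (intro mult_right_mono) auto
      then show ?thesis using a0 r by (simp add: abs_mult)
    qed
    have pos1: "0 < 1 + al P i j * r" using ar by (simp add: abs_le_iff)
    have "ln (L P' i) = ln (L P i) + ln (1 + al P i j * r)"
      unfolding P'_def using L_upd[OF P] L_pos[OF P, of i] pos1 by (simp add: ln_mult)
    moreover have "al P i j * r - 2 * (al P i j * r)^2 \<le> ln (1 + al P i j * r)" by (rule ln_lb[OF ar])
    moreover have "(al P i j * r)^2 \<le> r^2 * al P i j"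
    proof -
      have "(al P i j * r)^2 = (al P i j)^2 * r^2" by (simp add: power_mult_distrib)
      also have "\<dots> \<le> al P i j * r^2" using a0 by (intro mult_right_mono) (auto simp: power2_eq_square mult_left_le)
      finally show ?thesis by (simp add: mult.commute)
    qed
    ultimately have "ln (L P i) + al P i j * r - 2 * (r^2 * al P i j) \<le> ln (L P' i)" by linarith
    then have "e i * (ln (L P i) + al P i j * r - 2 * (r^2 * al P i j)) \<le> e i * ln (L P' i)"
      using e_pos[of i] by (simp add: mult_left_mono)
    then show ?thesis by (simp add: algebra_simps)
  qed
  have "(\<Sum>i\<in>UNIV. e i * ln (L P i) + e i * (r * al P i j) - 2 * r^2 * (e i * al P i j)) \<le> (\<Sum>i\<in>UNIV. e i * ln (L P' i))"
    by (rule sum_mono) (rule lnterm)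
  then have "(\<Sum>i\<in>UNIV. e i * ln (L P i)) + r * spend P j - 2 * r^2 * spend P j \<le> (\<Sum>i\<in>UNIV. e i * ln (L P' i))"
    by (simp add: sum.distrib sum_subtractf spend_def sum_distrib_left algebra_simps)
  then show ?thesis unfolding Phi_def P'_def[symmetric] using s1 by linarith
qed

end


context tat begin

lemma L_ratio: assumes "ppos P" "\<And>k. c * P k \<le> Q k" "0 \<le> c" shows "c * L P i \<le> L Q i"
proof -
  have "c * L P i = (\<Sum>k\<in>S i. (c * P k) / b i k)" unfolding L_def by (simp add: sum_distrib_left)
  also have "\<dots> \<le> L Q i" unfolding L_def
    using assms(2) b_pos by (intro sum_mono divide_right_mono) (auto intro: less_imp_le)
  finally show ?thesis .
qed

lemma al_ratio1: assumes P: "ppos P" and Q: "ppos Q" and c: "0 < c" "\<And>k. c * P k \<le> Q k"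
  shows "al Q i j \<le> (Q j / P j) * al P i j / c"
proof (cases "j \<in> S i")
  case True
  have LP: "0 < L P i" and LQ: "0 < L Q i" using L_pos P Q by auto
  have Lr: "c * L P i \<le> L Q i" using L_ratio[OF P c(2)] c by auto
  have "al Q i j = (Q j / b i j) / L Q i" using True by (simp add: al_def)
  also have "\<dots> \<le> (Q j / b i j) / (c * L P i)"
    using Lr LP LQ c b_pos[OF True] Q by (intro divide_left_mono) (auto intro!: divide_nonneg_pos less_imp_le mult_pos_pos)
  also have "\<dots> = (Q j / P j) * al P i j / c"
    using True P[rule_format, of j] c LP by (simp add: al_def field_simps)
  finally show ?thesis .
next
  case False then show ?thesis by (simp add: al_def)
qed

lemma al_ratio2: assumes P: "ppos P" and Q: "ppos Q" and c: "0 < c" "\<And>k. c * P k \<le> Q k" "\<And>k. c * Q k \<le> P k"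
  shows "al Q i j \<le> al P i j / c^2"
proof -
  have "al Q i j \<le> (Q j / P j) * al P i j / c" by (rule al_ratio1[OF P Q c(1,2)])
  also have "\<dots> \<le> (1 / c) * al P i j / c"
  proof -
    have "Q j / P j \<le> 1 / c" using c(3)[of j] c(1) P[rule_format, of j]
      by (simp add: field_simps mult.commute)
    then show ?thesis using al_nonneg[OF P] c(1) by (intro divide_right_mono mult_right_mono) auto
  qed
  finally show ?thesis by (simp add: power2_eq_square)
qed

lemma spend_ratio: assumes P: "ppos P" and Q: "ppos Q" and c: "0 < c" "\<And>k. c * P k \<le> Q k" and eq: "Q j = P j"
  shows "c * spend Q j \<le> spend P j"
proof -
  have "c * spend Q j = (\<Sum>i\<in>UNIV. e i * (c * al Q i j))" by (simp add: spend_def sum_distrib_left algebra_simps)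
  also have "\<dots> \<le> spend P j" unfolding spend_def
  proof (intro sum_mono mult_left_mono)
    fix i
    have "al Q i j \<le> (Q j / P j) * al P i j / c" by (rule al_ratio1[OF P Q c])
    then show "c * al Q i j \<le> al P i j" using eq P[rule_format, of j] c(1) by (simp add: field_simps)
  qed (use e_pos in \<open>auto intro: less_imp_le\<close>)
  finally show ?thesis .
qed

definition cc where "cc P j k = (\<Sum>i\<in>UNIV. e i * al P i j * al P i k)"

lemma cc_nonneg: "ppos P \<Longrightarrow> 0 \<le> cc P j k"
  unfolding cc_def by (intro sum_nonneg mult_nonneg_nonneg) (auto simp: al_nonneg e_pos less_imp_le)

lemma SE: assumes P: "ppos P" and kj: "k \<noteq> j" and r: "\<bar>r\<bar> \<le> lam"
  shows "\<bar>spend (P(k := P k * (1 + r))) j - spend P j\<bar> \<le> \<bar>r\<bar> * cc P j k / q0"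
proof -
  define P' where "P' = P(k := P k * (1 + r))"
  have q0p: "0 < q0" using q0_bounds by linarith
  have tmi: "\<bar>al P' i j - al P i j\<bar> \<le> \<bar>r\<bar> * (al P i j * al P i k) / q0" for i
  proof (cases "j \<in> S i")
    case True
    have a0: "0 \<le> al P i k" "al P i k \<le> 1" using al_nonneg[OF P] al_le1[OF P] by auto
    have ar: "\<bar>al P i k * r\<bar> \<le> lam"
    proof -
      have "al P i k * \<bar>r\<bar> \<le> 1 * \<bar>r\<bar>" using a0 by (intro mult_right_mono) auto
      then show ?thesis using a0 r by (simp add: abs_mult)
    qed
    define u where "u = 1 + al P i k * r"
    have u: "q0 \<le> u" using ar lam_pos unfolding u_def q0_def by (simp add: abs_le_iff)
    have LP: "0 < L P i" using L_pos[OF P] by auto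
    have "L P' i = L P i * u" unfolding P'_def u_def by (rule L_upd[OF P])
    then have "al P' i j = al P i j / u" using True kj u q0p LP unfolding P'_def
      by (simp add: al_def field_simps)
    then have "al P' i j - al P i j = - (al P i j * (al P i k * r)) / u"
      using u q0p unfolding u_def by (simp add: field_simps)
    then have "\<bar>al P' i j - al P i j\<bar> = (al P i j * al P i k * \<bar>r\<bar>) / u"
      using u q0p al_nonneg[OF P] by (simp add: abs_mult)
    also have "\<dots> \<le> (al P i j * al P i k * \<bar>r\<bar>) / q0"
      using u q0p al_nonneg[OF P] by (intro divide_left_mono mult_nonneg_nonneg) auto
    finally show ?thesis by (simp add: algebra_simps)
  next
    case False
    then show ?thesis using al_nonneg[OF P, of i j] al_nonneg[OF P, of i k] q0p
      by (simp add: al_def divide_nonneg_pos)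
  qed
  have "\<bar>spend P' j - spend P j\<bar> = \<bar>\<Sum>i\<in>UNIV. e i * (al P' i j - al P i j)\<bar>"
    by (simp add: spend_def sum_subtractf algebra_simps)
  also have "\<dots> \<le> (\<Sum>i\<in>UNIV. \<bar>e i * (al P' i j - al P i j)\<bar>)" by (rule sum_abs)
  also have "\<dots> \<le> (\<Sum>i\<in>UNIV. e i * (\<bar>r\<bar> * (al P i j * al P i k) / q0))"
  proof (intro sum_mono)
    fix i
    have "e i * \<bar>al P' i j - al P i j\<bar> \<le> e i * (\<bar>r\<bar> * (al P i j * al P i k) / q0)"
      using tmi[of i] e_pos[of i] by (intro mult_left_mono) auto
    then show "\<bar>e i * (al P' i j - al P i j)\<bar> \<le> e i * (\<bar>r\<bar> * (al P i j * al P i k) / q0)"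
      using e_pos[of i] by (simp add: abs_mult)
  qed
  also have "\<dots> = \<bar>r\<bar> * cc P j k / q0"
    by (simp add: cc_def sum_distrib_left sum_divide_distrib algebra_simps)
  finally show ?thesis unfolding P'_def .
qed

end


context tat begin

lemma cnt_window: assumes "tau j q < t" "t \<le> s j q" shows "cnt j t = q"
proof -
  have "s j k < t \<longleftrightarrow> k < q" for k
  proof
    assume "s j k < t"
    then have "s j k < s j q" using assms(2) by linarith
    then show "k < q" by (simp add: s_less_iff)
  next
    assume kq: "k < q"
    then obtain c where c: "q = Suc c" by (cases q) auto
    then have "s j k \<le> s j c" using kq by (simp add: s_le_iff)
    then show "s j k < t" using assms(1) c by (simp add: tau_Suc)
  qed
  then have "{k. s j k < t} = {..<q}" by auto
  then show ?thesis by (simp add: cnt_def)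
qed

lemma pv_window: "tau j q < t \<Longrightarrow> t \<le> s j q \<Longrightarrow> pv t j = a j q"
  by (simp add: pv_app cnt_window)

definition W where "W ev = {l. tau (fst ev) (snd ev) < tm l \<and> tm l < tm ev}"
definition Cr where "Cr ev = (\<Sum>l\<in>W ev. \<bar>rr (fst l) (snd l)\<bar> * cc (bef l) (fst ev) (fst l))"
definition Gv where "Gv ev = a (fst ev) (snd ev) * mm (fst ev) (snd ev) * zt (fst ev) (snd ev)"
definition sp where "sp ev = spend (bef ev) (fst ev)"

lemma W_sub: "W ev \<subseteq> F (tm ev)" by (auto simp: W_def F_mem)
lemma finite_W: "finite (W ev)" using W_sub finite_F finite_subset by blast

lemma Cr_nonneg: "0 \<le> Cr ev"
  unfolding Cr_def by (intro sum_nonneg mult_nonneg_nonneg) (auto simp: cc_nonneg bef_pos)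

lemma K1: assumes t: "tau j q < t" "t \<le> s j q"
  shows "\<bar>spend (bef (j,q)) j - spend (pv t) j\<bar> \<le> Cr (j,q) / q0"
proof -
  have q0p: "0 < q0" using q0_bounds by linarith
  have "spend (pv (s j q)) j - spend (pv t) j = (\<Sum>l\<in>F (s j q) - F t. spend (aft l) j - spend (bef l) j)"
    by (rule tele2[OF t(2)])
  then have "\<bar>spend (bef (j,q)) j - spend (pv t) j\<bar> = \<bar>\<Sum>l\<in>F (s j q) - F t. spend (aft l) j - spend (bef l) j\<bar>"
    by (simp add: bef_def tm_def)
  also have "\<dots> \<le> (\<Sum>l\<in>F (s j q) - F t. \<bar>spend (aft l) j - spend (bef l) j\<bar>)" by (rule sum_abs)
  also have "\<dots> \<le> (\<Sum>l\<in>F (s j q) - F t. \<bar>rr (fst l) (snd l)\<bar> * cc (bef l) j (fst l) / q0)"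
  proof (intro sum_mono)
    fix l assume l: "l \<in> F (s j q) - F t"
    obtain k q' where lq: "l = (k,q')" by (cases l)
    have tl: "t \<le> s k q'" "s k q' < s j q" using l lq by (auto simp: F_def)
    have kj: "k \<noteq> j"
    proof
      assume "k = j"
      then have "q' < q" using tl by (simp add: s_less_iff)
      then obtain c where c: "q = Suc c" "q' \<le> c" by (cases q) auto
      then have "s j q' \<le> tau j q" by (simp add: tau_Suc s_le_iff)
      then show False using tl(1) t(1) \<open>k = j\<close> by simp
    qed
    show "\<bar>spend (aft l) j - spend (bef l) j\<bar> \<le> \<bar>rr (fst l) (snd l)\<bar> * cc (bef l) j (fst l) / q0"
      unfolding lq aft_eq using SE[OF bef_pos kj rr_lam] by simp
  qed
  also have "\<dots> \<le> (\<Sum>l\<in>W (j,q). \<bar>rr (fst l) (snd l)\<bar> * cc (bef l) j (fst l) / q0)"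
  proof (rule sum_mono2[OF finite_W])
    show "F (s j q) - F t \<subseteq> W (j, q)" using t by (auto simp: F_mem W_def tm_def)
  qed (use q0p in \<open>auto intro!: divide_nonneg_pos mult_nonneg_nonneg cc_nonneg bef_pos\<close>)
  also have "\<dots> = Cr (j,q) / q0" by (simp add: Cr_def sum_divide_distrib)
  finally show ?thesis .
qed

lemma PE: "Phi (aft (j,q)) - Phi (bef (j,q)) \<le> - lam * dl j q * Gv (j,q)
   + 2 * lam^2 * dl j q * (mm j q)^2 * sp (j,q) + lam * dl j q * \<bar>mm j q\<bar> * Cr (j,q) / q0"
proof -
  define p where "p = a j q"
  define r where "r = rr j q"
  have q0p: "0 < q0" using q0_bounds by linarith
  have pp: "0 < p" by (simp add: p_def a_pos)
  have rl: "\<bar>r\<bar> \<le> 1/2" using rr_lam[of j q] lam_le unfolding r_def by linarith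
  have bj: "bef (j,q) j = p" by (simp add: bef_self p_def)
  have E: "Phi (aft (j,q)) - Phi (bef (j,q)) \<le> r * p - r * sp (j,q) + 2 * r^2 * sp (j,q)"
    using E1[OF bef_pos rl, of "(j,q)" j] unfolding aft_eq bj r_def sp_def by simp
  have spn: "0 \<le> sp (j,q)" by (simp add: sp_def spend_nonneg bef_pos)
  show ?thesis
  proof (cases "tau j q < s j q")
    case False
    then have "dl j q = 0" using tau_le[of j q] by (simp add: dl_def)
    then have "r = 0" by (simp add: r_def rr_def)
    then show ?thesis using E \<open>dl j q = 0\<close> by simp
  next
    case True
    from zt_between[OF True] obtain t1 t2 where t12: "t1 \<in> {tau j q<..s j q}" "t2 \<in> {tau j q<..s j q}"
      and z1: "excess_demand D (pv t1) j \<le> zt j q" and z2: "zt j q \<le> excess_demand D (pv t2) j" by blast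
    have pv1: "pv t1 j = p" and pv2: "pv t2 j = p" using t12 by (auto simp: pv_window p_def)
    have x1: "spend (pv t1) j \<le> p * (1 + zt j q)"
      using z1 pp unfolding excess_formula[OF pv_pos] pv1 by (simp add: field_simps)
    have x2: "p * (1 + zt j q) \<le> spend (pv t2) j"
      using z2 pp unfolding excess_formula[OF pv_pos] pv2 by (simp add: field_simps)
    have k1: "\<bar>sp (j,q) - spend (pv t1) j\<bar> \<le> Cr (j,q) / q0" "\<bar>sp (j,q) - spend (pv t2) j\<bar> \<le> Cr (j,q) / q0"
      using K1[of j q t1] K1[of j q t2] t12 by (auto simp: sp_def)
    have dev: "\<bar>p * (1 + zt j q) - sp (j,q)\<bar> \<le> Cr (j,q) / q0"
      using k1 x1 x2 by (simp add: abs_le_iff)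
    have dl0: "0 \<le> dl j q" "dl j q \<le> 1" using dl_nonneg dl_le1 by auto
    have main: "r * p - r * sp (j,q) = - lam * dl j q * Gv (j,q) + lam * dl j q * (mm j q * (p * (1 + zt j q) - sp (j,q)))"
      by (simp add: r_def rr_def Gv_def p_def algebra_simps)
    have "mm j q * (p * (1 + zt j q) - sp (j,q)) \<le> \<bar>mm j q\<bar> * (Cr (j,q) / q0)"
    proof -
      have "mm j q * (p * (1 + zt j q) - sp (j,q)) \<le> \<bar>mm j q\<bar> * \<bar>p * (1 + zt j q) - sp (j,q)\<bar>"
        by (metis abs_ge_self abs_mult)
      also have "\<dots> \<le> \<bar>mm j q\<bar> * (Cr (j,q) / q0)" using dev by (intro mult_left_mono) auto
      finally show ?thesis .
    qed
    then have "(lam * dl j q) * (mm j q * (p * (1 + zt j q) - sp (j,q))) \<le> (lam * dl j q) * (\<bar>mm j q\<bar> * (Cr (j,q) / q0))"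
      using lam_pos dl0 by (intro mult_left_mono) auto
    then have A: "lam * dl j q * (mm j q * (p * (1 + zt j q) - sp (j,q))) \<le> lam * dl j q * \<bar>mm j q\<bar> * Cr (j,q) / q0"
      by (simp add: mult.assoc)
    have "2 * r^2 * sp (j,q) = 2 * lam^2 * (dl j q * dl j q) * (mm j q)^2 * sp (j,q)"
      by (simp add: r_def rr_def power2_eq_square algebra_simps)
    also have "\<dots> \<le> 2 * lam^2 * dl j q * (mm j q)^2 * sp (j,q)"
    proof -
      have "dl j q * dl j q \<le> dl j q" using dl0 by (simp add: mult_left_le)
      then show ?thesis using spn by (intro mult_right_mono mult_left_mono) auto
    qed
    finally have B: "2 * r^2 * sp (j,q) \<le> 2 * lam^2 * dl j q * (mm j q)^2 * sp (j,q)" .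
    show ?thesis using E main A B by linarith
  qed
qed

end



lemma sum_le_single:
  assumes "finite A" "\<And>x y. x \<in> A \<Longrightarrow> y \<in> A \<Longrightarrow> x = y" "\<And>x. x \<in> A \<Longrightarrow> f x \<le> c" "0 \<le> c"
  shows "sum f A \<le> (c::real)"
proof (cases "A = {}")
  case True then show ?thesis using assms by simp
next
  case False
  then obtain x where x: "x \<in> A" by blast
  then have "A = {x}" using assms(2) by blast
  then show ?thesis using assms(3) x by simp
qed

context tat begin

lemma Gv_nonneg: "0 \<le> Gv ev"
proof -
  have "0 \<le> mm (fst ev) (snd ev) * zt (fst ev) (snd ev)" by (auto simp: mm_def min_def)
  then show ?thesis unfolding Gv_def using a_pos
    by (metis mult.assoc mult_nonneg_nonneg less_imp_le)
qed

lemma mm_sq: "(mm j q)^2 \<le> mm j q * zt j q"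
  by (auto simp: mm_def min_def power2_eq_square)

lemma sp_nonneg: "0 \<le> sp ev" by (simp add: sp_def spend_nonneg bef_pos)

lemma ratio_W: assumes "l \<in> W (j,q)"
  shows "q0 * bef (j,q) k \<le> bef l k" "q0 * bef l k \<le> bef (j,q) k"
proof -
  have l: "tau j q < tm l" "tm l < s j q" using assms by (auto simp: W_def tm_def)
  have "s j q \<le> tm l + 1" using l dl_le1[of j q] by (simp add: dl_def)
  from ratio[of "tm l" "s j q" k] l this show "q0 * bef (j,q) k \<le> bef l k" "q0 * bef l k \<le> bef (j,q) k"
    by (auto simp: bef_def tm_def)
qed

lemma Qb: "dl j q * (mm j q)^2 * sp (j,q) \<le> (2 / q0) * dl j q * Gv (j,q)"
proof (cases "tau j q < s j q")
  case False
  then have "dl j q = 0" using tau_le[of j q] by (simp add: dl_def)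
  then show ?thesis by simp
next
  case True
  have q0p: "0 < q0" using q0_bounds by linarith
  define p where "p = a j q"
  have pp: "0 < p" by (simp add: p_def a_pos)
  from zt_between[OF True] obtain t1 where t1: "t1 \<in> {tau j q<..s j q}"
      and z1: "excess_demand D (pv t1) j \<le> zt j q" by blast
  have pv1: "pv t1 j = p" using t1 by (auto simp: pv_window p_def)
  have x1: "spend (pv t1) j \<le> p * (1 + zt j q)"
    using z1 pp unfolding excess_formula[OF pv_pos] pv1 by (simp add: field_simps)
  have "s j q \<le> t1 + 1" using t1 dl_le1[of j q] by (simp add: dl_def)
  then have rt: "q0 * pv t1 k \<le> pv (s j q) k" for k using ratio(1)[of t1 "s j q" k] t1 by auto
  have "q0 * spend (pv (s j q)) j \<le> spend (pv t1) j"
    by (rule spend_ratio[OF pv_pos pv_pos q0p rt]) (simp add: pv_s pv1 p_def)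
  then have spb: "q0 * sp (j,q) \<le> p * (1 + zt j q)" using x1 by (simp add: sp_def bef_def tm_def)
  have zm1: "-1 \<le> zt j q" using mm_bounds[OF True] by (auto simp: mm_def)
  have "(mm j q)^2 * sp (j,q) \<le> (2 / q0) * Gv (j,q)"
  proof (cases "zt j q \<le> 1")
    case True
    then have m: "mm j q = zt j q" by (simp add: mm_def)
    have "q0 * ((zt j q)^2 * sp (j,q)) = (zt j q)^2 * (q0 * sp (j,q))" by simp
    also have "\<dots> \<le> (zt j q)^2 * (p * 2)"
    proof -
      have "p * (1 + zt j q) \<le> p * 2" using True pp by (intro mult_left_mono) auto
      then show ?thesis using spb by (intro mult_left_mono) auto
    qed
    finally have "(zt j q)^2 * sp (j,q) \<le> (2 / q0) * (p * zt j q * zt j q)"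
      using q0p by (simp add: field_simps power2_eq_square)
    then show ?thesis by (simp add: m Gv_def p_def)
  next
    case False
    then have m: "mm j q = 1" by (simp add: mm_def)
    have "p * (1 + zt j q) \<le> p * (2 * zt j q)" using False pp by (intro mult_left_mono) auto
    then have "q0 * sp (j,q) \<le> p * (2 * zt j q)" using spb by linarith
    then have "sp (j,q) \<le> (2 / q0) * (p * zt j q)" using q0p by (simp add: field_simps)
    then show ?thesis by (simp add: m Gv_def p_def)
  qed
  then have "dl j q * ((mm j q)^2 * sp (j,q)) \<le> dl j q * ((2 / q0) * Gv (j,q))"
    using dl_nonneg by (intro mult_left_mono) auto
  then show ?thesis by (simp add: algebra_simps)
qed

definition dlv where "dlv l = dl (fst l) (snd l)"

lemma dlv_nonneg: "0 \<le> dlv l" by (simp add: dlv_def dl_nonneg)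

lemma W_good_sum: "(\<Sum>l\<in>{l\<in>W (j,q). fst l = k}. dlv l) \<le> 2"
proof -
  have sub: "{l\<in>W (j,q). fst l = k} \<subseteq> Pair k ` {cnt k (tau j q)..<cnt k (s j q)}"
  proof
    fix l assume l: "l \<in> {l\<in>W (j,q). fst l = k}"
    obtain q' where lq: "l = (k,q')" using l by (cases l) auto
    have "tau j q < s k q'" "s k q' < s j q" using l lq by (auto simp: W_def tm_def)
    then have "\<not> q' < cnt k (tau j q)" "q' < cnt k (s j q)" using lt_cnt[of k q' "tau j q"] lt_cnt[of k q' "s j q"] by auto
    then show "l \<in> Pair k ` {cnt k (tau j q)..<cnt k (s j q)}" using lq by auto
  qed
  have "(\<Sum>l\<in>{l\<in>W (j,q). fst l = k}. dlv l) \<le> (\<Sum>l\<in>Pair k ` {cnt k (tau j q)..<cnt k (s j q)}. dlv l)"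
    by (rule sum_mono2[OF _ sub]) (auto simp: dlv_nonneg)
  also have "\<dots> = (\<Sum>q'\<in>{cnt k (tau j q)..<cnt k (s j q)}. dl k q')"
    by (subst sum.reindex) (auto simp: inj_on_def dlv_def)
  also have "\<dots> \<le> s j q - tau j q + 1" by (rule window_sumdl[OF tau_le])
  also have "\<dots> \<le> 2" using dl_le1[of j q] by (simp add: dl_def)
  finally show ?thesis .
qed

lemma PA: "(\<Sum>l\<in>W (j,q). dlv l * cc (bef l) j (fst l)) \<le> (2 / q0^4) * sp (j,q)"
proof -
  have q0p: "0 < q0" using q0_bounds by linarith
  define Pe where "Pe = bef (j,q)"
  have alb: "al (bef l) i k \<le> al Pe i k / q0^2" if "l \<in> W (j,q)" for l i k
    unfolding Pe_def by (rule al_ratio2[OF bef_pos bef_pos q0p]) (use ratio_W[OF that] in auto)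
  have ccb: "cc (bef l) j k \<le> (\<Sum>i\<in>UNIV. e i * al Pe i j * al Pe i k) / q0^4" if "l \<in> W (j,q)" for l k
  proof -
    have "cc (bef l) j k \<le> (\<Sum>i\<in>UNIV. e i * (al Pe i j / q0^2) * (al Pe i k / q0^2))"
      unfolding cc_def mult.assoc
    proof (intro sum_mono mult_left_mono)
      fix i
      show "al (bef l) i j * al (bef l) i k \<le> al Pe i j / q0^2 * (al Pe i k / q0^2)"
        by (intro mult_mono alb[OF that]) (auto simp: al_nonneg bef_pos Pe_def q0p)
    qed (auto simp: e_pos less_imp_le)
    also have "\<dots> = (\<Sum>i\<in>UNIV. e i * al Pe i j * al Pe i k) / q0^4"
      by (simp add: sum_divide_distrib eval_nat_numeral mult.assoc)
    finally show ?thesis .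
  qed
  have "(\<Sum>l\<in>W (j,q). dlv l * cc (bef l) j (fst l)) \<le>
        (\<Sum>l\<in>W (j,q). dlv l * ((\<Sum>i\<in>UNIV. e i * al Pe i j * al Pe i (fst l)) / q0^4))"
    by (intro sum_mono mult_left_mono ccb) (auto simp: dlv_nonneg)
  also have "\<dots> = (\<Sum>l\<in>W (j,q). \<Sum>i\<in>UNIV. dlv l * (e i * al Pe i j * al Pe i (fst l))) / q0^4"
    by (simp add: sum_divide_distrib sum_distrib_left)
  also have "\<dots> = (\<Sum>i\<in>UNIV. \<Sum>l\<in>W (j,q). dlv l * (e i * al Pe i j * al Pe i (fst l))) / q0^4"
    by (subst sum.swap) (rule refl)
  also have "\<dots> = (\<Sum>i\<in>UNIV. e i * al Pe i j * (\<Sum>l\<in>W (j,q). dlv l * al Pe i (fst l))) / q0^4"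
    by (intro arg_cong[where f="\<lambda>x. x / q0^4"] sum.cong refl) (simp add: sum_distrib_left mult_ac)
  also have "\<dots> \<le> (\<Sum>i\<in>UNIV. e i * al Pe i j * 2) / q0^4"
  proof -
    have "(\<Sum>l\<in>W (j,q). dlv l * al Pe i (fst l)) \<le> 2" for i
    proof -
      have "(\<Sum>l\<in>W (j,q). dlv l * al Pe i (fst l)) = (\<Sum>k\<in>UNIV. \<Sum>l\<in>{l\<in>W (j,q). fst l = k}. dlv l * al Pe i (fst l))"
        by (rule sum.group[symmetric]) (auto simp: finite_W)
      also have "\<dots> = (\<Sum>k\<in>UNIV. al Pe i k * (\<Sum>l\<in>{l\<in>W (j,q). fst l = k}. dlv l))"
        by (intro sum.cong refl) (simp add: sum_distrib_left mult.commute)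
      also have "\<dots> \<le> (\<Sum>k\<in>UNIV. al Pe i k * 2)"
        by (intro sum_mono mult_left_mono W_good_sum) (auto simp: al_nonneg bef_pos Pe_def)
      also have "\<dots> = 2" using al_sum[of Pe i] by (simp add: sum_distrib_right[symmetric] bef_pos Pe_def)
      finally show ?thesis .
    qed
    then show ?thesis using q0p
      by (intro divide_right_mono sum_mono mult_left_mono)
         (auto simp: e_pos less_imp_le al_nonneg bef_pos Pe_def)
  qed
  also have "\<dots> = (2 / q0^4) * sp (j,q)"
  proof -
    have "(\<Sum>i\<in>UNIV. e i * al Pe i j * 2) = 2 * spend Pe j" by (simp add: spend_def sum_distrib_left mult_ac)
    then show ?thesis by (simp add: sp_def Pe_def)
  qed
  finally show ?thesis .
qed

end


context tat begin

definition mmv where "mmv l = mm (fst l) (snd l)"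

lemma cc_sum: "ppos P \<Longrightarrow> (\<Sum>j\<in>UNIV. cc P j k) = spend P k"
proof -
  assume P: "ppos P"
  have "(\<Sum>j\<in>UNIV. cc P j k) = (\<Sum>i\<in>UNIV. e i * al P i k * (\<Sum>j\<in>UNIV. al P i j))"
    unfolding cc_def by (subst sum.swap) (simp add: sum_distrib_left mult_ac)
  also have "\<dots> = spend P k" using al_sum[OF P] by (simp add: spend_def)
  finally show ?thesis .
qed

lemma W_unique: "l \<in> W (j,q1) \<Longrightarrow> l \<in> W (j,q2) \<Longrightarrow> q1 = q2"
proof (rule ccontr)
  assume l1: "l \<in> W (j,q1)" and l2: "l \<in> W (j,q2)" and ne: "q1 \<noteq> q2"
  have gen: False if h1: "l \<in> W (j,a1)" and h2: "l \<in> W (j,a2)" and h3: "a1 < a2" for a1 a2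
  proof -
    obtain c where c: "a2 = Suc c" "a1 \<le> c" using h3 by (cases a2) auto
    have "s j a1 \<le> tau j a2" using c by (simp add: tau_Suc s_le_iff)
    then show False using h1 h2 by (auto simp: W_def tm_def)
  qed
  show False using ne gen[OF l1 l2] gen[OF l2 l1] by linarith
qed

lemma PB: "(\<Sum>ev\<in>F T. dlv ev * (\<Sum>l\<in>W ev. dlv l * (mmv l)^2 * cc (bef l) (fst ev) (fst l)))
   \<le> (\<Sum>l\<in>F T. dlv l * (mmv l)^2 * sp l)"
proof -
  define f where "f ev l = dlv ev * (dlv l * (mmv l)^2 * cc (bef l) (fst ev) (fst l))" for ev l
  have WF: "ev \<in> F T \<Longrightarrow> {l. l \<in> F T \<and> l \<in> W ev} = W ev" for ev
    using W_sub[of ev] F_mono[of "tm ev" T] by (auto simp: F_mem)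
  have "(\<Sum>ev\<in>F T. dlv ev * (\<Sum>l\<in>W ev. dlv l * (mmv l)^2 * cc (bef l) (fst ev) (fst l)))
      = (\<Sum>ev\<in>F T. \<Sum>l\<in>{l. l \<in> F T \<and> l \<in> W ev}. f ev l)"
    by (intro sum.cong refl) (simp add: WF f_def sum_distrib_left)
  also have "\<dots> = (\<Sum>l\<in>F T. \<Sum>ev\<in>{ev. ev \<in> F T \<and> l \<in> W ev}. f ev l)"
    by (rule sum.swap_restrict[OF finite_F finite_F])
  also have "\<dots> \<le> (\<Sum>l\<in>F T. dlv l * (mmv l)^2 * sp l)"
  proof (rule sum_mono)
    fix l assume lF: "l \<in> F T"
    define A where "A = {ev. ev \<in> F T \<and> l \<in> W ev}"
    have fA: "finite A" using finite_F by (simp add: A_def)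
    have "(\<Sum>ev\<in>A. f ev l) = (\<Sum>j\<in>UNIV. \<Sum>ev\<in>{ev. ev \<in> A \<and> fst ev = j}. f ev l)"
      by (rule sum.group[symmetric]) (auto simp: fA)
    also have "\<dots> \<le> (\<Sum>j\<in>UNIV. dlv l * (mmv l)^2 * cc (bef l) j (fst l))"
    proof (rule sum_mono)
      fix j
      show "(\<Sum>ev\<in>{ev. ev \<in> A \<and> fst ev = j}. f ev l) \<le> dlv l * (mmv l)^2 * cc (bef l) j (fst l)"
      proof (rule sum_le_single)
        show "finite {ev. ev \<in> A \<and> fst ev = j}" using fA by simp
        show "x = y" if "x \<in> {ev. ev \<in> A \<and> fst ev = j}" "y \<in> {ev. ev \<in> A \<and> fst ev = j}" for x y
          using that W_unique[of l j "snd x" "snd y"] by (cases x; cases y) (auto simp: A_def)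
        show "0 \<le> dlv l * (mmv l)^2 * cc (bef l) j (fst l)"
          by (intro mult_nonneg_nonneg) (auto simp: dlv_nonneg cc_nonneg bef_pos)
        show "f x l \<le> dlv l * (mmv l)^2 * cc (bef l) j (fst l)" if "x \<in> {ev. ev \<in> A \<and> fst ev = j}" for x
        proof -
          have "fst x = j" using that by simp
          have "dlv x * (dlv l * (mmv l)^2 * cc (bef l) j (fst l)) \<le> 1 * (dlv l * (mmv l)^2 * cc (bef l) j (fst l))"
            by (intro mult_right_mono mult_nonneg_nonneg) (auto simp: dlv_def dl_le1 dl_nonneg cc_nonneg bef_pos)
          then show ?thesis using \<open>fst x = j\<close> by (simp add: f_def)
        qed
      qed
    qed
    also have "\<dots> = dlv l * (mmv l)^2 * sp l"
      using cc_sum[OF bef_pos, of l "fst l"] by (simp add: sum_distrib_left[symmetric] sp_def)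
    finally show "(\<Sum>ev\<in>{ev. ev \<in> F T \<and> l \<in> W ev}. f ev l) \<le> dlv l * (mmv l)^2 * sp l"
      by (simp add: A_def)
  qed
  finally show ?thesis .
qed

end


context tat begin

definition Xv where "Xv ev = dlv ev * (mmv ev)^2 * sp ev"

lemma Xv_nonneg: "0 \<le> Xv ev" by (simp add: Xv_def dlv_nonneg sp_nonneg)

lemma Xv_G: "Xv ev \<le> (2 / q0) * dlv ev * Gv ev"
  using Qb[of "fst ev" "snd ev"] by (simp add: Xv_def dlv_def mmv_def)

lemma step1: "Phi (aft ev) - Phi (bef ev) \<le> - lam * dlv ev * Gv ev
   + (2 * lam^2 + lam^2 / q0^5) * Xv ev
   + (lam^2 / (2 * q0)) * (dlv ev * (\<Sum>l\<in>W ev. dlv l * (mmv l)^2 * cc (bef l) (fst ev) (fst l)))"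
proof -
  obtain j q where ev: "ev = (j,q)" by (cases ev)
  have q0p: "0 < q0" using q0_bounds by linarith
  define cl where "cl l = cc (bef l) j (fst l)" for l
  have clnn: "0 \<le> cl l" for l by (simp add: cl_def cc_nonneg bef_pos)
  define dm where "dm = dlv ev"
  define m where "m = mmv ev"
  have dmnn: "0 \<le> dm" by (simp add: dm_def dlv_nonneg)
  have "lam * dl j q * \<bar>mm j q\<bar> * Cr (j,q) / q0
      = (\<Sum>l\<in>W ev. (lam^2 / q0) * (dm * dlv l * cl l) * (\<bar>m\<bar> * \<bar>mmv l\<bar>))"
    unfolding Cr_def ev
    by (simp add: ev rr_abs sum_distrib_left sum_divide_distrib dm_def m_def dlv_def mmv_def cl_def power2_eq_square mult_ac)
  also have "\<dots> \<le> (\<Sum>l\<in>W ev. (lam^2 / q0) * (dm * dlv l * cl l) * ((m^2 + (mmv l)^2) / 2))"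
  proof (rule sum_mono)
    fix l
    have "\<bar>m\<bar> * \<bar>mmv l\<bar> \<le> (m^2 + (mmv l)^2) / 2"
    proof -
      have "(\<bar>m\<bar> - \<bar>mmv l\<bar>)^2 = m^2 + (mmv l)^2 - 2 * (\<bar>m\<bar> * \<bar>mmv l\<bar>)"
        by (simp add: power2_eq_square algebra_simps)
      moreover have "0 \<le> (\<bar>m\<bar> - \<bar>mmv l\<bar>)^2" by simp
      ultimately have "2 * (\<bar>m\<bar> * \<bar>mmv l\<bar>) \<le> m^2 + (mmv l)^2" by linarith
      then show ?thesis by simp
    qed
    then show "(lam^2 / q0) * (dm * dlv l * cl l) * (\<bar>m\<bar> * \<bar>mmv l\<bar>) \<le> (lam^2 / q0) * (dm * dlv l * cl l) * ((m^2 + (mmv l)^2) / 2)"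
      using q0p dmnn by (intro mult_left_mono mult_nonneg_nonneg) (auto simp: dlv_nonneg clnn)
  qed
  also have "\<dots> = (lam^2 / (2 * q0)) * dm * m^2 * (\<Sum>l\<in>W ev. dlv l * cl l)
      + (lam^2 / (2 * q0)) * (dm * (\<Sum>l\<in>W ev. dlv l * (mmv l)^2 * cl l))"
    by (simp add: sum_distrib_left sum_divide_distrib add_divide_distrib sum.distrib algebra_simps)
  also have "\<dots> \<le> (lam^2 / (2 * q0)) * dm * m^2 * ((2 / q0^4) * sp ev)
      + (lam^2 / (2 * q0)) * (dm * (\<Sum>l\<in>W ev. dlv l * (mmv l)^2 * cl l))"
    using PA[of j q] q0p dmnn unfolding ev cl_def
    by (intro add_right_mono mult_left_mono) (auto intro!: mult_nonneg_nonneg)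
  also have "(lam^2 / (2 * q0)) * dm * m^2 * ((2 / q0^4) * sp ev) = (lam^2 / q0^5) * Xv ev"
    using q0p by (simp add: Xv_def dm_def m_def field_simps power_def)
  finally have cross: "lam * dl j q * \<bar>mm j q\<bar> * Cr (j,q) / q0 \<le> (lam^2 / q0^5) * Xv ev
      + (lam^2 / (2 * q0)) * (dlv ev * (\<Sum>l\<in>W ev. dlv l * (mmv l)^2 * cc (bef l) (fst ev) (fst l)))"
    by (simp add: dm_def cl_def ev)
  have xv: "2 * lam^2 * dl j q * (mm j q)^2 * sp (j,q) = 2 * lam^2 * Xv ev"
    by (simp add: Xv_def ev dlv_def mmv_def)
  have d1: "lam * dlv ev * Gv ev = lam * dl j q * Gv (j,q)" by (simp add: ev dlv_def)
  have d2: "(2 * lam^2 + lam^2 / q0^5) * Xv ev = 2 * lam^2 * Xv ev + (lam^2 / q0^5) * Xv ev"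
    by (simp add: distrib_right)
  have d3: "Phi (aft ev) - Phi (bef ev) = Phi (aft (j,q)) - Phi (bef (j,q))" by (simp add: ev)
  show ?thesis using PE[of j q] cross xv d1 d2 d3 by linarith
qed


lemma K_bound: "(2 * lam^2 + lam^2 / q0^5 + lam^2 / (2 * q0)) * (2 / q0) \<le> lam / 2"
proof -
  have q0: "9/10 \<le> q0" "q0 \<le> 1" using q0_bounds by auto
  define u where "u = 1 / q0"
  have u: "0 < u" "u \<le> 10/9" using q0 unfolding u_def by (auto simp: divide_le_eq)
  have u5: "u^5 \<le> (10/9)^5" using u by (intro power_mono) auto
  have eq: "(2 * lam^2 + lam^2 / q0^5 + lam^2 / (2 * q0)) * (2 / q0) = lam^2 * ((2 + u^5 + u/2) * (2 * u))"
    using q0 unfolding u_def by (simp add: field_simps power_def)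
  have "(2 + u^5 + u/2) * (2 * u) \<le> (2 + (10/9)^5 + (10/9)/2) * (2 * (10/9))"
  proof (rule mult_mono)
    show "2 + u^5 + u/2 \<le> 2 + (10/9)^5 + (10/9)/2" using u u5 by linarith
  qed (use u in auto)
  also have "\<dots> \<le> 10" by (simp add: power_divide)
  finally have K: "(2 + u^5 + u/2) * (2 * u) \<le> 10" .
  have "lam^2 * ((2 + u^5 + u/2) * (2 * u)) \<le> lam^2 * 10"
    using K by (intro mult_left_mono) auto
  also have "\<dots> = lam * (10 * lam)" by (simp add: power2_eq_square)
  also have "\<dots> \<le> lam * (1/2)" using lam_pos lam_le by (intro mult_left_mono) auto
  finally show ?thesis using eq by simp
qed

lemma total: "Phi (pv T) - Phi (\<lambda>j. a j 0) \<le> - (lam / 2) * (\<Sum>ev\<in>F T. dlv ev * Gv ev)"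
proof -
  define c1 where "c1 = 2 * lam^2 + lam^2 / q0^5"
  define c2 where "c2 = lam^2 / (2 * q0)"
  have q0p: "0 < q0" using q0_bounds by linarith
  have c12: "0 \<le> c1" "0 \<le> c2" using q0p by (auto simp: c1_def c2_def)
  have "Phi (pv T) - Phi (\<lambda>j. a j 0) = (\<Sum>ev\<in>F T. Phi (aft ev) - Phi (bef ev))"
    using tele[of Phi T] by simp
  also have "\<dots> \<le> (\<Sum>ev\<in>F T. - lam * dlv ev * Gv ev + c1 * Xv ev
      + c2 * (dlv ev * (\<Sum>l\<in>W ev. dlv l * (mmv l)^2 * cc (bef l) (fst ev) (fst l))))"
    unfolding c1_def c2_def by (intro sum_mono step1)
  also have "\<dots> = - lam * (\<Sum>ev\<in>F T. dlv ev * Gv ev) + c1 * (\<Sum>ev\<in>F T. Xv ev)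
      + c2 * (\<Sum>ev\<in>F T. dlv ev * (\<Sum>l\<in>W ev. dlv l * (mmv l)^2 * cc (bef l) (fst ev) (fst l)))"
    by (simp add: sum.distrib sum_subtractf sum_negf sum_distrib_left mult.assoc)
  also have "\<dots> \<le> - lam * (\<Sum>ev\<in>F T. dlv ev * Gv ev) + c1 * (\<Sum>ev\<in>F T. Xv ev)
      + c2 * (\<Sum>ev\<in>F T. Xv ev)"
    using PB[of T] c12 by (intro add_left_mono mult_left_mono) (auto simp: Xv_def)
  also have "\<dots> = - lam * (\<Sum>ev\<in>F T. dlv ev * Gv ev) + (c1 + c2) * (\<Sum>ev\<in>F T. Xv ev)"
    by (simp add: distrib_right)
  also have "\<dots> \<le> - lam * (\<Sum>ev\<in>F T. dlv ev * Gv ev) + (c1 + c2) * ((2 / q0) * (\<Sum>ev\<in>F T. dlv ev * Gv ev))"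
  proof -
    have "(\<Sum>ev\<in>F T. Xv ev) \<le> (\<Sum>ev\<in>F T. (2 / q0) * (dlv ev * Gv ev))"
      by (intro sum_mono) (metis Xv_G mult.assoc)
    then have "(\<Sum>ev\<in>F T. Xv ev) \<le> (2 / q0) * (\<Sum>ev\<in>F T. dlv ev * Gv ev)"
      by (simp add: sum_distrib_left)
    then show ?thesis using c12 by (intro add_left_mono mult_left_mono) auto
  qed
  also have "\<dots> = (- lam + (c1 + c2) * (2 / q0)) * (\<Sum>ev\<in>F T. dlv ev * Gv ev)"
    by (simp add: algebra_simps)
  also have "\<dots> \<le> (- (lam / 2)) * (\<Sum>ev\<in>F T. dlv ev * Gv ev)"
  proof (rule mult_right_mono)
    show "- lam + (c1 + c2) * (2 / q0) \<le> - (lam / 2)" using K_bound unfolding c1_def c2_def by linarith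
    show "0 \<le> (\<Sum>ev\<in>F T. dlv ev * Gv ev)"
      by (intro sum_nonneg mult_nonneg_nonneg) (auto simp: dlv_nonneg Gv_nonneg)
  qed
  finally show ?thesis by simp
qed

end


context tat begin

definition Etot where "Etot = (\<Sum>i\<in>UNIV. e i)"
definition beta where "beta = (\<Sum>i\<in>UNIV. \<Sum>j\<in>S i. 1 / b i j)"
definition C1 where "C1 = Etot * ln beta + Etot * ln (2 * Etot) - Etot"

lemma Etot_pos: "0 < Etot"
  unfolding Etot_def by (rule sum_pos) (auto simp: e_pos)

lemma inv_b_le_beta: "j \<in> S i \<Longrightarrow> 1 / b i j \<le> beta"
proof -
  assume j: "j \<in> S i"
  have "1 / b i j \<le> (\<Sum>j\<in>S i. 1 / b i j)"
    by (rule member_le_sum) (use j b_pos in \<open>auto intro: less_imp_le\<close>)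
  also have "\<dots> \<le> beta" unfolding beta_def
    by (rule member_le_sum) (auto intro!: sum_nonneg simp: b_pos less_imp_le)
  finally show ?thesis .
qed

lemma beta_pos: "0 < beta"
proof -
  obtain i :: 'b where True by simp
  obtain j where j: "j \<in> S i" using S_ne by blast
  have "0 < 1 / b i j" using b_pos[OF j] by simp
  then show ?thesis using inv_b_le_beta[OF j] by linarith
qed

lemma Phi_lower: assumes P: "ppos P" shows "(\<Sum>j\<in>UNIV. P j) / 2 - C1 \<le> Phi P"
proof -
  define SP where "SP = (\<Sum>j\<in>UNIV. P j)"
  have SPp: "0 < SP"
  proof -
    obtain j :: 'g where True by simp
    have "P j \<le> SP" unfolding SP_def by (rule member_le_sum) (auto simp: P less_imp_le)
    then show ?thesis using P[rule_format, of j] by linarith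
  qed
  have Lb: "L P i \<le> beta * SP" for i
  proof -
    have "L P i \<le> (\<Sum>j\<in>S i. P j * beta)" unfolding L_def
    proof (rule sum_mono)
      fix j assume j: "j \<in> S i"
      have "P j / b i j = P j * (1 / b i j)" by simp
      also have "\<dots> \<le> P j * beta" using inv_b_le_beta[OF j] P by (intro mult_left_mono) (auto intro: less_imp_le)
      finally show "P j / b i j \<le> P j * beta" .
    qed
    also have "\<dots> \<le> (\<Sum>j\<in>UNIV. P j * beta)"
      by (rule sum_mono2) (auto simp: P beta_pos less_imp_le)
    also have "\<dots> = beta * SP" by (simp add: SP_def sum_distrib_right mult.commute)
    finally show ?thesis .
  qed
  have lnSP: "ln SP \<le> ln (2 * Etot) + SP / (2 * Etot) - 1"
  proof -
    have "ln (SP / (2 * Etot)) \<le> SP / (2 * Etot) - 1" using SPp Etot_pos by (intro ln_le_minus_one) auto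
    then show ?thesis using SPp Etot_pos by (simp add: ln_div)
  qed
  have "e i * ln (L P i) \<le> e i * (ln beta + ln (2 * Etot) + SP / (2 * Etot) - 1)" for i
  proof -
    have "ln (L P i) \<le> ln (beta * SP)" using Lb[of i] L_pos[OF P, of i] by simp
    also have "\<dots> = ln beta + ln SP" using beta_pos SPp by (simp add: ln_mult)
    finally show ?thesis using lnSP e_pos[of i] by (intro mult_left_mono) auto
  qed
  then have "(\<Sum>i\<in>UNIV. e i * ln (L P i)) \<le> (\<Sum>i\<in>UNIV. e i * (ln beta + ln (2 * Etot) + SP / (2 * Etot) - 1))"
    by (intro sum_mono)
  also have "\<dots> = Etot * (ln beta + ln (2 * Etot) + SP / (2 * Etot) - 1)"
    by (simp add: Etot_def sum_distrib_right)
  also have "\<dots> = C1 + SP / 2" using Etot_pos by (simp add: C1_def field_simps)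
  finally show ?thesis unfolding Phi_def SP_def by simp
qed

definition Phi0 where "Phi0 = Phi (\<lambda>j. a j 0)"
definition Bp where "Bp = 2 * (Phi0 + C1)"
definition fG where "fG T = (\<Sum>ev\<in>F T. dlv ev * Gv ev)"

lemma fG_nonneg_terms: "0 \<le> dlv ev * Gv ev" by (simp add: dlv_nonneg Gv_nonneg)

lemma Phi_pv_le: "Phi (pv T) \<le> Phi0"
proof -
  have "0 \<le> fG T" unfolding fG_def by (intro sum_nonneg fG_nonneg_terms)
  then have "0 \<le> (lam / 2) * fG T" using lam_pos by simp
  then show ?thesis using total[of T] unfolding Phi0_def fG_def by linarith
qed

lemma price_bound: "pv T j \<le> Bp"
proof -
  have "pv T j \<le> (\<Sum>k\<in>UNIV. pv T k)" by (rule member_le_sum) (auto simp: pv_pos less_imp_le)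
  moreover have "(\<Sum>k\<in>UNIV. pv T k) / 2 - C1 \<le> Phi0" using Phi_lower[OF pv_pos, of T] Phi_pv_le[of T] by linarith
  ultimately have "pv T j \<le> 2 * Phi0 + 2 * C1" by linarith
  then show ?thesis unfolding Bp_def by simp
qed

lemma a_bound: "a j q \<le> Bp" using price_bound[of "s j q" j] by (simp add: pv_s)

lemma fG_bound: "fG T \<le> (2 / lam) * (Phi0 + C1)"
proof -
  have "Phi (pv T) \<ge> - C1"
  proof -
    have "0 \<le> (\<Sum>k\<in>UNIV. pv T k)" by (intro sum_nonneg) (auto simp: pv_pos less_imp_le)
    then show ?thesis using Phi_lower[OF pv_pos, of T] by linarith
  qed
  then have "(lam / 2) * fG T \<le> Phi0 + C1" using total[of T] unfolding Phi0_def fG_def by linarith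
  then show ?thesis using lam_pos by (simp add: field_simps)
qed

lemma fG_mono: "T1 \<le> T2 \<Longrightarrow> fG T1 \<le> fG T2"
  unfolding fG_def by (rule sum_mono2[OF finite_F F_mono]) (auto simp: fG_nonneg_terms)

lemma fG_diff: "T1 \<le> T2 \<Longrightarrow> fG T2 - fG T1 = (\<Sum>ev\<in>F T2 - F T1. dlv ev * Gv ev)"
  unfolding fG_def using sum.subset_diff[OF F_mono finite_F, of T1 T2 "\<lambda>ev. dlv ev * Gv ev"] by simp

end


context tat begin

lemma abs_le_delta: assumes "0 < d" shows "\<bar>m::real\<bar> \<le> d + m^2 / d"
proof (cases "\<bar>m\<bar> \<le> d")
  case True
  then show ?thesis using assms by (simp add: add_increasing2)
next
  case False
  then have "\<bar>m\<bar> * d \<le> \<bar>m\<bar> * \<bar>m\<bar>" by (intro mult_left_mono) auto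
  then have "\<bar>m\<bar> \<le> m^2 / d" using assms by (simp add: field_simps power2_eq_square)
  then show ?thesis using assms by linarith
qed

lemma step_bound: assumes d: "0 < d"
  shows "a j q * \<bar>rr j q\<bar> \<le> lam * (d * Bp * dl j q + dl j q * Gv (j,q) / d)"
proof -
  have ap: "0 < a j q" by (simp add: a_pos)
  have "a j q * \<bar>mm j q\<bar> \<le> a j q * (d + (mm j q)^2 / d)"
    using abs_le_delta[OF d] ap by (intro mult_left_mono) auto
  also have "\<dots> = a j q * d + a j q * (mm j q)^2 / d" by (simp add: algebra_simps)
  also have "\<dots> \<le> d * Bp + Gv (j,q) / d"
  proof -
    have "a j q * d \<le> Bp * d" using a_bound[of j q] d by (intro mult_right_mono) auto
    moreover have "a j q * (mm j q)^2 \<le> Gv (j,q)"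
      using mm_sq[of j q] ap by (simp add: Gv_def mult_left_mono mult.assoc)
    then have "a j q * (mm j q)^2 / d \<le> Gv (j,q) / d" using d by (intro divide_right_mono) auto
    ultimately show ?thesis by (simp add: mult.commute)
  qed
  finally have A: "a j q * \<bar>mm j q\<bar> \<le> d * Bp + Gv (j,q) / d" .
  have "a j q * \<bar>rr j q\<bar> = lam * dl j q * (a j q * \<bar>mm j q\<bar>)" by (simp add: rr_abs mult_ac)
  also have "\<dots> \<le> lam * dl j q * (d * Bp + Gv (j,q) / d)"
    using A lam_pos dl_nonneg[of j q] by (intro mult_left_mono) auto
  also have "\<dots> = lam * (d * Bp * dl j q + dl j q * Gv (j,q) / d)" by (simp add: algebra_simps)
  finally show ?thesis .
qed

lemma window_change:
  assumes d: "0 < d" and tt: "t \<le> t'" "t' \<le> t + 1"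
  shows "\<bar>price_at s a j t - price_at s a j t'\<bar> \<le> lam * (2 * d * Bp + (fG t' - fG t) / d)"
proof -
  define N1 where "N1 = cnt j t"
  define N2 where "N2 = cnt j t'"
  have N12: "N1 \<le> N2" using cnt_mono[OF tt(1)] by (simp add: N1_def N2_def)
  have Bp0: "0 \<le> Bp" using price_bound[of 0 j] pv_pos[of 0] by (smt (verit))
  have "\<bar>price_at s a j t - price_at s a j t'\<bar> = \<bar>\<Sum>q\<in>{N1..<N2}. a j (Suc q) - a j q\<bar>"
    using sum_Suc_diff'[OF N12, of "a j"] by (simp add: price_at_cnt N1_def N2_def)
  also have "\<dots> \<le> (\<Sum>q\<in>{N1..<N2}. \<bar>a j (Suc q) - a j q\<bar>)" by (rule sum_abs)
  also have "\<dots> = (\<Sum>q\<in>{N1..<N2}. a j q * \<bar>rr j q\<bar>)"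
    by (intro sum.cong refl) (simp add: a_Suc algebra_simps abs_mult a_pos less_imp_le)
  also have "\<dots> \<le> (\<Sum>q\<in>{N1..<N2}. lam * (d * Bp * dl j q + dl j q * Gv (j,q) / d))"
    by (intro sum_mono step_bound[OF d])
  also have "\<dots> = lam * (d * Bp * (\<Sum>q\<in>{N1..<N2}. dl j q) + (\<Sum>q\<in>{N1..<N2}. dl j q * Gv (j,q)) / d)"
    by (simp add: sum_distrib_left[symmetric] sum.distrib sum_divide_distrib mult.assoc)
  also have "\<dots> \<le> lam * (d * Bp * 2 + (fG t' - fG t) / d)"
  proof -
    have s1: "(\<Sum>q\<in>{N1..<N2}. dl j q) \<le> 2"
      using window_sumdl[OF tt(1), of j] tt(2) by (simp add: N1_def N2_def)
    have sub: "Pair j ` {N1..<N2} \<subseteq> F t' - F t"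
    proof
      fix x assume "x \<in> Pair j ` {N1..<N2}"
      then obtain q where x: "x = (j,q)" "N1 \<le> q" "q < N2" by auto
      then have "\<not> s j q < t" "s j q < t'" using lt_cnt[of j q t] lt_cnt[of j q t'] N1_def N2_def by auto
      then show "x \<in> F t' - F t" using x by (simp add: F_def)
    qed
    have "(\<Sum>q\<in>{N1..<N2}. dl j q * Gv (j,q)) = (\<Sum>ev\<in>Pair j ` {N1..<N2}. dlv ev * Gv ev)"
      by (subst sum.reindex) (auto simp: inj_on_def dlv_def)
    also have "\<dots> \<le> (\<Sum>ev\<in>F t' - F t. dlv ev * Gv ev)"
      by (rule sum_mono2[OF _ sub]) (auto simp: finite_F fG_nonneg_terms)
    also have "\<dots> = fG t' - fG t" using fG_diff[OF tt(1)] by simp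
    finally have s2: "(\<Sum>q\<in>{N1..<N2}. dl j q * Gv (j,q)) \<le> fG t' - fG t" .
    have "d * Bp * (\<Sum>q\<in>{N1..<N2}. dl j q) \<le> d * Bp * 2"
      using s1 d Bp0 by (intro mult_left_mono) auto
    moreover have "(\<Sum>q\<in>{N1..<N2}. dl j q * Gv (j,q)) / d \<le> (fG t' - fG t) / d"
      using s2 d by (intro divide_right_mono) auto
    ultimately show ?thesis using lam_pos by (intro mult_left_mono) auto
  qed
  finally show ?thesis by (simp add: mult_ac)
qed

lemma conclusion: "\<forall>\<epsilon>>0. \<exists>T. \<forall>j t dt. T \<le> t \<longrightarrow> 0 \<le> dt \<longrightarrow> dt \<le> 1 \<longrightarrow>
           \<bar>price_at s a j t - price_at s a j (t + dt)\<bar> \<le> \<epsilon>"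
proof (intro allI impI)
  fix \<epsilon> :: real assume ep: "0 < \<epsilon>"
  have Bp0: "0 \<le> Bp" using price_bound[of 0 undefined] pv_pos[of 0] by (smt (verit))
  define d where "d = \<epsilon> / (4 * lam * (Bp + 1))"
  have dp: "0 < d" using ep lam_pos Bp0 by (simp add: d_def)
  define eta where "eta = \<epsilon> * d / (2 * lam)"
  have etap: "0 < eta" using ep dp lam_pos by (simp add: eta_def)
  define Sup where "Sup = (SUP T\<in>UNIV. fG T)"
  have bdd: "bdd_above (range fG)" by (rule bdd_aboveI2[where M="(2 / lam) * (Phi0 + C1)"]) (rule fG_bound)
  have "Sup - eta < Sup" using etap by simp
  then obtain T0 where T0: "Sup - eta < fG T0"
    using less_cSUP_iff[of UNIV fG "Sup - eta"] bdd unfolding Sup_def by auto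
  show "\<exists>T. \<forall>j t dt. T \<le> t \<longrightarrow> 0 \<le> dt \<longrightarrow> dt \<le> 1 \<longrightarrow>
           \<bar>price_at s a j t - price_at s a j (t + dt)\<bar> \<le> \<epsilon>"
  proof (intro exI allI impI)
    fix j and t dt :: real assume t: "T0 \<le> t" and dt: "0 \<le> dt" "dt \<le> 1"
    have "fG (t + dt) \<le> Sup" unfolding Sup_def by (rule cSUP_upper) (auto simp: bdd)
    moreover have "fG T0 \<le> fG t" by (rule fG_mono[OF t])
    ultimately have fd: "fG (t + dt) - fG t \<le> eta" using T0 by linarith
    have "\<bar>price_at s a j t - price_at s a j (t + dt)\<bar> \<le> lam * (2 * d * Bp + (fG (t + dt) - fG t) / d)"
      by (rule window_change[OF dp]) (use dt in auto)
    also have "\<dots> \<le> lam * (2 * d * Bp + eta / d)"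
      using fd dp lam_pos by (intro mult_left_mono add_left_mono divide_right_mono) auto
    also have "\<dots> \<le> \<epsilon> / 2 + \<epsilon> / 2"
    proof -
      have nz: "4 * lam * (Bp + 1) \<noteq> 0" using lam_pos Bp0 by auto
      have dd: "d * (4 * lam * (Bp + 1)) = \<epsilon>" unfolding d_def using nz by simp
      have "lam * (2 * d * Bp) \<le> lam * (2 * d * (Bp + 1))"
        using lam_pos dp by (intro mult_left_mono) auto
      also have "\<dots> = d * (4 * lam * (Bp + 1)) / 2" by (simp add: algebra_simps)
      finally have A: "lam * (2 * d * Bp) \<le> \<epsilon> / 2" using dd by simp
      have B: "lam * (eta / d) = \<epsilon> / 2"
        using dp lam_pos by (simp add: eta_def)
      have "lam * (2 * d * Bp + eta / d) = lam * (2 * d * Bp) + lam * (eta / d)" by (rule distrib_left)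
      then show ?thesis using A B by linarith
    qed
    finally show "\<bar>price_at s a j t - price_at s a j (t + dt)\<bar> \<le> \<epsilon>" by simp
  qed
qed

end

theorem mainTheorem7:
  fixes e :: "'b::finite \<Rightarrow> real" and S :: "'b \<Rightarrow> 'g::finite set"
    and b :: "'b \<Rightarrow> 'g \<Rightarrow> real"
    and D :: "('g \<Rightarrow> real) \<Rightarrow> 'b \<Rightarrow> 'g \<Rightarrow> real"
    and s :: "'g \<Rightarrow> nat \<Rightarrow> real" and a :: "'g \<Rightarrow> nat \<Rightarrow> real"
    and zt :: "'g \<Rightarrow> nat \<Rightarrow> real" and lam :: real
  assumes "leontief_fisher_market e S b"
    and "is_leontief_demand e S b D"
    and "async_schedule s"
    and "0 < lam" and "lam \<le> 1 / 23.46"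
    and "\<forall>j. 0 < a j 0"
    and "tatonnement_run D s a zt lam"
  shows "\<forall>\<epsilon>>0. \<exists>T. \<forall>j t dt. T \<le> t \<longrightarrow> 0 \<le> dt \<longrightarrow> dt \<le> 1 \<longrightarrow>
           \<bar>price_at s a j t - price_at s a j (t + dt)\<bar> \<le> \<epsilon>"
proof -
  have l20: "lam \<le> 1 / 20" using assms(5) by simp
  interpret tat e S b D s a zt lam
    using assms l20 by unfold_locales auto
  show ?thesis by (rule conclusion)
qed

end
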